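(* Let $(V,M)$ be a valuation domain with quotient field $L$, $M\neq0$, of the form $V=K+M$ with $K$ a subfield of $V$. Let $D$ be a subring of $K$ with quotient field $F$, let $\widetilde{D}$ be the integral closure of $D$ in $K$, let $R=D+M$ and let $\overline{R}$ be the integral closure of $R$ in $L$. Then: (6) $R$ is a DVR $\iff$ $D=K$ and $V$ is a DVR $\iff$ $R=V$ is a DVR; and likewise $R$ is a rational valuation domain $\iff$ $D=K$ and $V$ is a rational valuation domain $\iff$ $R=V$ is a rational valuation domain. (7) $R\subseteq\overline{R}$ is a root extension (resp. bounded root extension) $\iff$ $D\subseteq\widetilde{D}$ is a root extension (resp. bounded root extension). (8) $R$ is an AV-domain $\iff$ $\widetilde{D}$ is a valuation domain with quotient field $K$ and $D\subseteq\widetilde{D}$ is a root extension $\iff$ $D$ is an AV-domain and $F\subseteq K$ is a root extension (i.e. $K/F$ is purely inseparable or $K$ is algebraic over a finite field). (9) The following are equivalent: $R$ is an AV-domain with $\overline{R}$ a DVR; $R$ is an AV-domain whose maximal ideal $Q$ satisfies $\bigcap_{n\ge1}Q^n=0$; $R$ is an AV-domain and for each ideal $A$ with $0\subsetneq A\subsetneq R$ there is $n$ with $Q^n\subseteq A$, $Q$ the maximal ideal of $R$; $V$ is a DVR, $D=F$ is a field and $F\subseteq K$ is a root extension.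
   Context: A root extension $R\subseteq S$: each $s\in S$ has some power $s^n\in R$; bounded if one $n$ works for all $s$. AV-domain: domain where for nonzero $a,b$ some $n$ gives $a^n\mid b^n$ or $b^n\mid a^n$. DVR: local PID not a field. Rational valuation domain: valuation domain whose value group is order-isomorphic to a subgroup of $(\mathbb{Q},+)$. *)

theory Defs
  imports "HOL-Computational_Algebra.Polynomial"
begin

text \<open>All rings are subrings of a fixed field (the type 'a), which plays the role of L.\<close>

definition subring :: "'a::field set \<Rightarrow> bool" where
  "subring S \<longleftrightarrow> 0 \<in> S \<and> 1 \<in> S \<and> (\<forall>x\<in>S. \<forall>y\<in>S. x + y \<in> S \<and> x * y \<in> S) \<and> (\<forall>x\<in>S. - x \<in> S)"

definition subfield :: "'a::field set \<Rightarrow> bool" where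
  "subfield S \<longleftrightarrow> subring S \<and> (\<forall>x\<in>S. x \<noteq> 0 \<longrightarrow> inverse x \<in> S)"

definition frac_field :: "'a::field set \<Rightarrow> 'a set" where
  "frac_field S = {a / b | a b. a \<in> S \<and> b \<in> S \<and> b \<noteq> 0}"

definition ideal :: "'a::field set \<Rightarrow> 'a set \<Rightarrow> bool" where
  "ideal I S \<longleftrightarrow> I \<subseteq> S \<and> 0 \<in> I \<and> (\<forall>x\<in>I. \<forall>y\<in>I. x + y \<in> I) \<and> (\<forall>x\<in>I. \<forall>s\<in>S. s * x \<in> I)"

definition maximal_ideal :: "'a::field set \<Rightarrow> 'a set \<Rightarrow> bool" where
  "maximal_ideal I S \<longleftrightarrow> ideal I S \<and> I \<noteq> S \<and>
     (\<forall>J. ideal J S \<and> I \<subseteq> J \<longrightarrow> J = I \<or> J = S)"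

definition valuation_domain :: "'a::field set \<Rightarrow> bool" where
  "valuation_domain S \<longleftrightarrow> subring S \<and>
     (\<forall>a\<in>S. \<forall>b\<in>S. (\<exists>c\<in>S. b = a * c) \<or> (\<exists>c\<in>S. a = b * c))"

definition DVR :: "'a::field set \<Rightarrow> bool" where
  "DVR S \<longleftrightarrow> subring S \<and> (\<exists>!I. maximal_ideal I S) \<and>
     (\<forall>I. ideal I S \<longrightarrow> (\<exists>a\<in>S. I = (\<lambda>s. a * s) ` S)) \<and> \<not> subfield S"

text \<open>Rational valuation domain: valuation domain whose value group
  (F^*/U(S), ordered by xU \<le> yU iff y/x \<in> S, F the quotient field) is isomorphic as an
  ordered group to a subgroup of (\<rat>,+).  Such an isomorphism is the same as a group
  homomorphism v : F^* \<rightarrow> \<rat> with v x \<ge> 0 iff x \<in> S (its kernel is then U(S)).\<close>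
definition rational_valuation_domain :: "'a::field set \<Rightarrow> bool" where
  "rational_valuation_domain S \<longleftrightarrow> valuation_domain S \<and>
     (\<exists>v :: 'a \<Rightarrow> rat.
        (\<forall>x\<in>frac_field S - {0}. \<forall>y\<in>frac_field S - {0}. v (x * y) = v x + v y) \<and>
        (\<forall>x\<in>frac_field S - {0}. 0 \<le> v x \<longleftrightarrow> x \<in> S))"

definition AV_domain :: "'a::field set \<Rightarrow> bool" where
  "AV_domain S \<longleftrightarrow> subring S \<and>
     (\<forall>a\<in>S. \<forall>b\<in>S. a \<noteq> 0 \<and> b \<noteq> 0 \<longrightarrow>
        (\<exists>n\<ge>1. (\<exists>c\<in>S. b ^ n = a ^ n * c) \<or> (\<exists>c\<in>S. a ^ n = b ^ n * c)))"

definition root_ext :: "'a::field set \<Rightarrow> 'a set \<Rightarrow> bool" where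
  "root_ext R S \<longleftrightarrow> R \<subseteq> S \<and> (\<forall>s\<in>S. \<exists>n\<ge>1. s ^ n \<in> R)"

definition bounded_root_ext :: "'a::field set \<Rightarrow> 'a set \<Rightarrow> bool" where
  "bounded_root_ext R S \<longleftrightarrow> R \<subseteq> S \<and> (\<exists>n\<ge>1. \<forall>s\<in>S. s ^ n \<in> R)"

definition integral_closure :: "'a::field set \<Rightarrow> 'a set \<Rightarrow> 'a set" where
  "integral_closure S T = {x \<in> T. \<exists>p. lead_coeff p = 1 \<and> (\<forall>i. coeff p i \<in> S) \<and> poly p x = 0}"

definition ideal_prod :: "'a::field set \<Rightarrow> 'a set \<Rightarrow> 'a set" where
  "ideal_prod I J = {(\<Sum>i<k. a i * b i) | (k::nat) (a::nat \<Rightarrow> 'a) b. \<forall>i<k. a i \<in> I \<and> b i \<in> J}"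

primrec ideal_pow :: "'a::field set \<Rightarrow> 'a set \<Rightarrow> nat \<Rightarrow> 'a set" where
  "ideal_pow S Q 0 = S"
| "ideal_pow S Q (Suc n) = ideal_prod Q (ideal_pow S Q n)"

end

theory Submission
  imports Defs "Jordan_Normal_Form.Char_Poly"
begin

lemma subring_0: "subring S \<Longrightarrow> 0 \<in> S" by (simp add: subring_def)
lemma subring_1: "subring S \<Longrightarrow> 1 \<in> S" by (simp add: subring_def)
lemma subring_add: "subring S \<Longrightarrow> x \<in> S \<Longrightarrow> y \<in> S \<Longrightarrow> x + y \<in> S" by (simp add: subring_def)
lemma subring_mult: "subring S \<Longrightarrow> x \<in> S \<Longrightarrow> y \<in> S \<Longrightarrow> x * y \<in> S" by (simp add: subring_def)
lemma subring_uminus: "subring S \<Longrightarrow> x \<in> S \<Longrightarrow> - x \<in> S" by (simp add: subring_def)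
lemma subring_diff: "subring S \<Longrightarrow> x \<in> S \<Longrightarrow> y \<in> S \<Longrightarrow> x - y \<in> S"
  using subring_add[of S x "-y"] subring_uminus[of S y] by simp
lemma subring_pow: "subring S \<Longrightarrow> x \<in> S \<Longrightarrow> x ^ n \<in> S"
  by (induct n) (auto intro: subring_1 subring_mult)
lemma subring_sum: "subring S \<Longrightarrow> (\<And>i. i \<in> A \<Longrightarrow> f i \<in> S) \<Longrightarrow> sum f A \<in> S"
  by (induct A rule: infinite_finite_induct) (auto intro: subring_0 subring_add)
lemma subring_prod: "subring S \<Longrightarrow> (\<And>i. i \<in> A \<Longrightarrow> f i \<in> S) \<Longrightarrow> prod f A \<in> S"
  by (induct A rule: infinite_finite_induct) (auto intro: subring_1 subring_mult)


definition PS :: "'a::field set \<Rightarrow> 'a poly set" where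
  "PS S = {q. \<forall>i. coeff q i \<in> S}"

lemma PS_add: "subring S \<Longrightarrow> p \<in> PS S \<Longrightarrow> q \<in> PS S \<Longrightarrow> p + q \<in> PS S"
  by (auto simp: PS_def intro: subring_add)
lemma PS_uminus: "subring S \<Longrightarrow> p \<in> PS S \<Longrightarrow> - p \<in> PS S"
  by (auto simp: PS_def intro: subring_uminus)
lemma PS_mult: "subring S \<Longrightarrow> p \<in> PS S \<Longrightarrow> q \<in> PS S \<Longrightarrow> p * q \<in> PS S"
  by (auto simp: PS_def coeff_mult intro!: subring_sum subring_mult)
lemma PS_0: "subring S \<Longrightarrow> 0 \<in> PS S"
  by (auto simp: PS_def intro: subring_0)
lemma PS_1: "subring S \<Longrightarrow> 1 \<in> PS S"
  by (auto simp: PS_def coeff_1 intro: subring_0 subring_1)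
lemma PS_const: "subring S \<Longrightarrow> c \<in> S \<Longrightarrow> [:c:] \<in> PS S"
  by (auto simp: PS_def coeff_pCons split: nat.splits intro: subring_0)
lemma PS_X: "subring S \<Longrightarrow> [:0,1:] \<in> PS S"
  by (auto simp: PS_def coeff_pCons split: nat.splits intro: subring_0 subring_1)
lemma PS_pCons: "subring S \<Longrightarrow> c \<in> S \<Longrightarrow> q \<in> PS S \<Longrightarrow> pCons c q \<in> PS S"
  by (auto simp: PS_def coeff_pCons split: nat.splits)
lemma PS_sum: "subring S \<Longrightarrow> (\<And>i. i \<in> A \<Longrightarrow> f i \<in> PS S) \<Longrightarrow> sum f A \<in> PS S"
  by (induct A rule: infinite_finite_induct) (auto intro: PS_0 PS_add)
lemma PS_prod: "subring S \<Longrightarrow> (\<And>i. i \<in> A \<Longrightarrow> f i \<in> PS S) \<Longrightarrow> prod f A \<in> PS S"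
  by (induct A rule: infinite_finite_induct) (auto intro: PS_1 PS_mult)
lemma PS_signof: "subring S \<Longrightarrow> signof p \<in> PS S"
  by (cases p rule: sign_cases) (auto intro: PS_1 PS_uminus)

lemma char_poly_PS:
  assumes S: "subring S" and A: "A \<in> carrier_mat n n"
    and ent: "\<And>i j. i < n \<Longrightarrow> j < n \<Longrightarrow> A $$ (i,j) \<in> S"
  shows "char_poly A \<in> PS S"
proof -
  have cm: "char_poly_matrix A \<in> carrier_mat n n" using A by simp
  have e: "char_poly_matrix A $$ (i,j) \<in> PS S" if "i < n" "j < n" for i j
    using that A ent[OF that] S
    by (auto simp: char_poly_matrix_def intro!: PS_add PS_const PS_X PS_0 subring_uminus PS_pCons PS_1)
  show ?thesis unfolding char_poly_def det_def'[OF cm]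
    apply (rule PS_sum[OF S])
    apply (rule PS_mult[OF S PS_signof[OF S]])
    apply (rule PS_prod[OF S])
    using e by (auto simp: permutes_def)
qed

lemma mat_pow_entries:
  assumes S: "subring S" and A: "A \<in> carrier_mat n n"
    and ent: "\<And>i j. i < n \<Longrightarrow> j < n \<Longrightarrow> A $$ (i,j) \<in> S"
  shows "i < n \<Longrightarrow> j < n \<Longrightarrow> (A ^\<^sub>m m) $$ (i,j) \<in> S"
proof (induct m arbitrary: i j)
  case 0 then show ?case using A S by (auto intro: subring_0 subring_1)
next
  case (Suc m)
  have "(A ^\<^sub>m Suc m) $$ (i,j) = row (A ^\<^sub>m m) i \<bullet> col A j"
    using Suc A by simp
  also have "\<dots> \<in> S" unfolding scalar_prod_def
    using Suc A by (auto intro!: subring_sum[OF S] subring_mult[OF S] ent)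
  finally show ?case .
qed

lemma integral_pow:
  fixes x :: "'a::field"
  assumes S: "subring S" and p1: "lead_coeff p = 1" and p2: "\<forall>i. coeff p i \<in> S"
    and p3: "poly p x = 0"
  shows "\<exists>q. lead_coeff q = 1 \<and> (\<forall>i. coeff q i \<in> S) \<and> poly q (x ^ n) = 0"
proof -
  define k where "k = degree p"
  have k1: "k \<ge> 1"
  proof (rule ccontr)
    assume "\<not> k \<ge> 1"
    then have "degree p = 0" by (simp add: k_def)
    then obtain c where "p = [:c:]" by (metis degree_eq_zeroE)
    then have "p = [:1:]" using p1 by simp
    then show False using p3 by simp
  qed
  define C where "C = mat k k (\<lambda>(i,j). if i + 1 < k then (if j = i + 1 then 1 else 0) else - coeff p j)"
  define v where "v = vec k (\<lambda>i. x ^ i)"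
  have C: "C \<in> carrier_mat k k" by (simp add: C_def)
  have v: "v \<in> carrier_vec k" by (simp add: v_def)
  have Cent: "C $$ (i,j) \<in> S" if "i < k" "j < k" for i j
    using that S p2 by (auto simp: C_def intro: subring_0 subring_1 subring_uminus)
  have polysum: "(\<Sum>j<k. coeff p j * x ^ j) + x ^ k = 0"
  proof -
    have "poly p x = (\<Sum>j\<le>k. coeff p j * x ^ j)" by (simp add: poly_altdef k_def)
    also have "\<dots> = (\<Sum>j<k. coeff p j * x ^ j) + x ^ k"
      using p1 by (simp add: k_def lessThan_Suc_atMost[symmetric])
    finally show ?thesis using p3 by simp
  qed
  have Cv: "C *\<^sub>v v = x \<cdot>\<^sub>v v"
  proof (rule eq_vecI)
    show "dim_vec (C *\<^sub>v v) = dim_vec (x \<cdot>\<^sub>v v)" using C v by simp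
  next
    fix i assume "i < dim_vec (x \<cdot>\<^sub>v v)"
    then have i: "i < k" using v by simp
    have "(C *\<^sub>v v) $ i = (\<Sum>j\<in>{0..<k}. C $$ (i,j) * x ^ j)"
      using i C v by (simp add: scalar_prod_def v_def row_def)
    also have "\<dots> = x ^ (i + 1)"
    proof (cases "i + 1 < k")
      case True
      then have "(\<Sum>j\<in>{0..<k}. C $$ (i,j) * x ^ j) = (\<Sum>j\<in>{0..<k}. if j = i + 1 then x ^ j else 0)"
        by (intro sum.cong) (auto simp: C_def)
      also have "\<dots> = x ^ (i + 1)" using True by simp
      finally show ?thesis .
    next
      case False
      then have ik: "i + 1 = k" using i by simp
      have "(\<Sum>j\<in>{0..<k}. C $$ (i,j) * x ^ j) = (\<Sum>j\<in>{0..<k}. - (coeff p j * x ^ j))"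
        using False i by (intro sum.cong) (auto simp: C_def)
      also have "\<dots> = x ^ k" using polysum
        by (simp add: sum_negf atLeast0LessThan) (metis add.commute add_eq_0_iff)
      finally show ?thesis using ik by simp
    qed
    also have "\<dots> = (x \<cdot>\<^sub>v v) $ i" using i by (simp add: v_def)
    finally show "(C *\<^sub>v v) $ i = (x \<cdot>\<^sub>v v) $ i" .
  qed
  have v0: "v \<noteq> 0\<^sub>v k"
  proof
    assume "v = 0\<^sub>v k"
    then have "v $ 0 = 0" using k1 by simp
    then show False using k1 by (simp add: v_def)
  qed
  have ev: "eigenvector C v x" unfolding eigenvector_def using C v Cv v0 by simp
  define B where "B = C ^\<^sub>m n"
  have B: "B \<in> carrier_mat k k" using C by (simp add: B_def)
  have Bv: "B *\<^sub>v v = x ^ n \<cdot>\<^sub>v v" unfolding B_def by (rule eigenvector_pow[OF C ev])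
  have "eigenvalue B (x ^ n)" unfolding eigenvalue_def eigenvector_def
    using B v v0 Bv by auto
  then have r: "poly (char_poly B) (x ^ n) = 0" using eigenvalue_root_char_poly[OF B] by simp
  have m: "lead_coeff (char_poly B) = 1" using degree_monic_char_poly[OF B] by simp
  have "char_poly B \<in> PS S"
    by (rule char_poly_PS[OF S B]) (use mat_pow_entries[OF S C Cent] in \<open>simp add: B_def\<close>)
  then show ?thesis using r m by (auto simp: PS_def)
qed


definition isint :: "'a::field set \<Rightarrow> 'a \<Rightarrow> bool" where
  "isint S x \<longleftrightarrow> (\<exists>p. lead_coeff p = 1 \<and> (\<forall>i. coeff p i \<in> S) \<and> poly p x = 0)"

lemma isint_pow: "subring S \<Longrightarrow> isint S x \<Longrightarrow> isint S (x ^ n)"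
  unfolding isint_def using integral_pow by blast

lemma isint_unit:
  fixes y :: "'a::field"
  assumes S: "subring S" and y: "isint S y" and y0: "y \<noteq> 0" and yi: "inverse y \<in> S"
  shows "y \<in> S"
proof -
  obtain p where p1: "lead_coeff p = 1" and p2: "\<forall>i. coeff p i \<in> S" and p3: "poly p y = 0"
    using y unfolding isint_def by blast
  define k where "k = degree p"
  define z where "z = inverse y"
  have k1: "k \<ge> 1"
  proof (rule ccontr)
    assume "\<not> k \<ge> 1"
    then have "degree p = 0" by (simp add: k_def)
    then obtain c where "p = [:c:]" by (metis degree_eq_zeroE)
    then have "p = [:1:]" using p1 by simp
    then show False using p3 by simp
  qed
  have polysum: "(\<Sum>j<k. coeff p j * y ^ j) + y ^ k = 0"
  proof -
    have "poly p y = (\<Sum>j\<le>k. coeff p j * y ^ j)" by (simp add: poly_altdef k_def)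
    also have "\<dots> = (\<Sum>j<k. coeff p j * y ^ j) + y ^ k"
      using p1 by (simp add: k_def lessThan_Suc_atMost[symmetric])
    finally show ?thesis using p3 by simp
  qed
  have yz: "y * z = 1" using y0 by (simp add: z_def)
  have e1: "y = y ^ k * z ^ (k - 1)"
  proof -
    have "y ^ k = y * y ^ (k - 1)" using k1 by (metis Suc_diff_le diff_Suc_1 power_Suc)
    then have "y ^ k * z ^ (k - 1) = y * (y * z) ^ (k - 1)" by (simp add: power_mult_distrib)
    then show ?thesis using yz by simp
  qed
  have e2: "y ^ j * z ^ (k - 1) = z ^ (k - 1 - j)" if "j < k" for j
  proof -
    have "z ^ (k - 1) = z ^ j * z ^ (k - 1 - j)" using that by (simp add: power_add[symmetric])
    then have "y ^ j * z ^ (k - 1) = (y * z) ^ j * z ^ (k - 1 - j)" by (simp add: power_mult_distrib)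
    then show ?thesis using yz by simp
  qed
  have "y = - (\<Sum>j<k. coeff p j * y ^ j) * z ^ (k - 1)"
    using e1 polysum by (metis add.commute add_eq_0_iff)
  also have "\<dots> = - (\<Sum>j<k. coeff p j * (y ^ j * z ^ (k - 1)))"
    by (simp add: sum_distrib_right mult.assoc)
  also have "\<dots> = - (\<Sum>j<k. coeff p j * z ^ (k - 1 - j))"
    using e2 by simp
  also have "\<dots> \<in> S" using S p2 yi
    by (auto intro!: subring_uminus subring_sum subring_mult subring_pow simp: z_def)
  finally show ?thesis .
qed

lemma isint_inv_pow:
  fixes x :: "'a::field"
  assumes S: "subring S" and x: "isint S x" and x0: "x \<noteq> 0" and xi: "inverse x ^ n \<in> S"
  shows "x ^ n \<in> S"
proof -
  have "inverse (x ^ n) \<in> S" using xi by (metis power_inverse)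
  moreover have "x ^ n \<noteq> 0" using x0 by simp
  ultimately show ?thesis using isint_unit[OF S isint_pow[OF S x, of n]] by blast
qed

lemma isint_root:
  fixes x :: "'a::field"
  assumes S: "subring S" and n: "n \<ge> 1" and xn: "x ^ n \<in> S"
  shows "isint S x"
proof -
  define p where "p = monom 1 n + [:- (x ^ n):]"
  have dp: "degree p = n" using n unfolding p_def
    by (subst degree_add_eq_left) (auto simp: degree_monom_eq)
  have c0: "coeff [:- (x ^ n):] n = 0" using n by (cases n) auto
  have "lead_coeff p = 1" using dp c0 by (simp add: p_def coeff_monom)
  moreover have "\<forall>i. coeff p i \<in> S"
  proof
    fix i
    have ci: "coeff [:- (x ^ n):] i \<in> S" using S xn
      by (cases i) (auto intro: subring_uminus subring_0)
    have "coeff p i = (if n = i then 1 else 0) + coeff [:- (x ^ n):] i"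
      by (simp add: p_def coeff_monom)
    then show "coeff p i \<in> S" using ci S by (auto intro: subring_add subring_0 subring_1)
  qed
  moreover have "poly p x = 0" by (simp add: p_def poly_monom)
  ultimately show ?thesis unfolding isint_def by blast
qed

lemma isint_mem: "subring S \<Longrightarrow> x \<in> S \<Longrightarrow> isint S x"
  using isint_root[of S 1 x] by simp

lemma isint_mono: "isint S x \<Longrightarrow> S \<subseteq> T \<Longrightarrow> isint T x"
  unfolding isint_def by blast

lemma integral_closure_isint: "integral_closure S T = {x \<in> T. isint S x}"
  unfolding integral_closure_def isint_def by simp

lemma valuation_nonunits_ideal:
  assumes V: "valuation_domain S"
  shows "ideal {x\<in>S. x = 0 \<or> inverse x \<notin> S} S"
proof -
  have Ss: "subring S" using V by (simp add: valuation_domain_def)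
  have val: "\<And>a b. a \<in> S \<Longrightarrow> b \<in> S \<Longrightarrow> (\<exists>c\<in>S. b = a * c) \<or> (\<exists>c\<in>S. a = b * c)"
    using V by (simp add: valuation_domain_def)
  have add: "a + b \<in> {x\<in>S. x = 0 \<or> inverse x \<notin> S}"
    if a: "a \<in> S" "a = 0 \<or> inverse a \<notin> S" and b: "b \<in> S" "b = 0 \<or> inverse b \<notin> S" for a b
  proof -
    have gen: "a + b = 0 \<or> inverse (a + b) \<notin> S"
      if a: "a \<in> S" "a = 0 \<or> inverse a \<notin> S" and b: "b \<in> S" and c: "c \<in> S" "b = a * c" for a b c
    proof (rule ccontr)
      assume h: "\<not> (a + b = 0 \<or> inverse (a + b) \<notin> S)"
      then have ab: "a + b \<noteq> 0" "inverse (a + b) \<in> S" by auto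
      have e: "a + b = a * (1 + c)" using c by (simp add: algebra_simps)
      have "a * (1 + c) \<noteq> 0" using ab(1) e by simp
      then have a0: "a \<noteq> 0" and c0: "1 + c \<noteq> 0" by auto
      have "inverse a = (1 + c) * inverse (a + b)"
        unfolding e using c0 by (simp add: inverse_mult_distrib)
      also have "\<dots> \<in> S" using Ss c ab by (auto intro: subring_mult subring_add subring_1)
      finally show False using a a0 by simp
    qed
    have s: "a + b \<in> S" using Ss a b by (simp add: subring_add)
    have "a + b = 0 \<or> inverse (a + b) \<notin> S"
    proof -
      from val[OF a(1) b(1)] show ?thesis
      proof
        assume "\<exists>c\<in>S. b = a * c"
        then obtain c where "c \<in> S" "b = a * c" by blast
        then show ?thesis using gen[OF a b(1)] by blast
      next
        assume "\<exists>c\<in>S. a = b * c"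
        then obtain c where "c \<in> S" "a = b * c" by blast
        then have "b + a = 0 \<or> inverse (b + a) \<notin> S" using gen[OF b a(1)] by blast
        then show ?thesis by (simp add: add.commute)
      qed
    qed
    then show ?thesis using s by simp
  qed
  have mult: "s * a \<in> {x\<in>S. x = 0 \<or> inverse x \<notin> S}"
    if a: "a \<in> S" "a = 0 \<or> inverse a \<notin> S" and s: "s \<in> S" for a s
  proof -
    have "s * a = 0 \<or> inverse (s * a) \<notin> S"
    proof (rule ccontr)
      assume "\<not> (s * a = 0 \<or> inverse (s * a) \<notin> S)"
      then have h: "s * a \<noteq> 0" "inverse (s * a) \<in> S" by auto
      have "inverse a = s * inverse (s * a)" using h by (simp add: field_simps)
      also have "\<dots> \<in> S" using Ss s h by (auto intro: subring_mult)
      finally show False using a h by simp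
    qed
    then show ?thesis using Ss a s by (auto intro: subring_mult)
  qed
  show ?thesis unfolding ideal_def using add mult Ss by (auto intro: subring_0)
qed


lemma monic_split:
  fixes x :: "'a::field"
  assumes p1: "lead_coeff p = 1"
  shows "poly p x = (\<Sum>j<degree p. coeff p j * x ^ j) + x ^ degree p"
proof -
  have "poly p x = (\<Sum>j\<le>degree p. coeff p j * x ^ j)" by (simp add: poly_altdef)
  also have "\<dots> = (\<Sum>j<degree p. coeff p j * x ^ j) + x ^ degree p"
    using p1 by (simp add: lessThan_Suc_atMost[symmetric])
  finally show ?thesis .
qed

lemma monic_root_deg:
  fixes x :: "'a::field"
  assumes p1: "lead_coeff p = 1" and p3: "poly p x = 0" shows "degree p \<ge> 1"
proof (rule ccontr)
  assume "\<not> degree p \<ge> 1"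
  then have "degree p = 0" by simp
  then obtain c where "p = [:c:]" by (metis degree_eq_zeroE)
  then have "p = [:1:]" using p1 by simp
  then show False using p3 by simp
qed

lemma ideal_sum: "ideal I S \<Longrightarrow> (\<And>i. i \<in> A \<Longrightarrow> f i \<in> I) \<Longrightarrow> sum f A \<in> I"
  by (induct A rule: infinite_finite_induct) (auto simp: ideal_def)

lemma PS_power: "subring S \<Longrightarrow> p \<in> PS S \<Longrightarrow> p ^ n \<in> PS S"
  by (induct n) (auto intro: PS_1 PS_mult)

lemma isint_shift1:
  fixes c :: "'a::field"
  assumes S: "subring S" and n: "n \<ge> 1" and cn: "c ^ n \<in> S"
  shows "isint S (1 + c)"
proof -
  define p where "p = [:-1, 1:] ^ n + [:- (c ^ n):]"
  have d1: "degree ([:-1, 1:] ^ n :: 'a poly) = n" by (subst degree_power_eq) simp_all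
  have l1: "lead_coeff ([:-1, 1:] ^ n) = (1::'a)" by (simp add: lead_coeff_power)
  have dp: "degree p = n" unfolding p_def using n d1
    by (subst degree_add_eq_left) auto
  have c0: "coeff [:- (c ^ n):] n = 0" using n by (cases n) auto
  have "lead_coeff p = 1" using dp c0 l1 d1 by (simp add: p_def)
  moreover have "p \<in> PS S" unfolding p_def
    by (intro PS_add PS_power PS_pCons PS_const S subring_uminus subring_1 cn PS_0)
  moreover have "poly p (1 + c) = 0" by (simp add: p_def)
  ultimately show ?thesis unfolding isint_def PS_def by blast
qed




locale setting =
  fixes V M K D :: "'a::field set"
  assumes V: "valuation_domain V" and VL: "frac_field V = UNIV"
    and M: "maximal_ideal M V" and M0: "M \<noteq> {0}"
    and K: "subfield K" and KV: "K \<subseteq> V"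
    and VKM: "V = {k + m | k m. k \<in> K \<and> m \<in> M}"
    and D: "subring D" and DK: "D \<subseteq> K"
begin

lemma Vs: "subring V" using V by (simp add: valuation_domain_def)
lemma Ks: "subring K" using K by (simp add: subfield_def)
lemma K_inv: "k \<in> K \<Longrightarrow> inverse k \<in> K"
  using K by (cases "k = 0") (auto simp: subfield_def subring_def)
lemma val: "a \<in> V \<Longrightarrow> b \<in> V \<Longrightarrow> (\<exists>c\<in>V. b = a * c) \<or> (\<exists>c\<in>V. a = b * c)"
  using V by (simp add: valuation_domain_def)
lemma Mi: "ideal M V" using M by (simp add: maximal_ideal_def)
lemma MV: "M \<subseteq> V" using Mi by (simp add: ideal_def)
lemma M_0: "0 \<in> M" using Mi by (simp add: ideal_def)
lemma M_add: "x \<in> M \<Longrightarrow> y \<in> M \<Longrightarrow> x + y \<in> M" using Mi by (simp add: ideal_def)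
lemma M_mult: "v \<in> V \<Longrightarrow> m \<in> M \<Longrightarrow> v * m \<in> M" using Mi by (simp add: ideal_def)
lemma M_mult2: "v \<in> V \<Longrightarrow> m \<in> M \<Longrightarrow> m * v \<in> M" by (metis M_mult mult.commute)
lemma M_uminus: "m \<in> M \<Longrightarrow> - m \<in> M"
  using M_mult[of "-1" m] Vs by (simp add: subring_uminus subring_1)
lemma M_diff: "x \<in> M \<Longrightarrow> y \<in> M \<Longrightarrow> x - y \<in> M"
  using M_add[of x "-y"] M_uminus[of y] by simp
lemma one_notin_M: "1 \<notin> M"
proof
  assume "1 \<in> M"
  then have "V \<subseteq> M" using M_mult[of _ 1] by force
  then show False using M MV by (auto simp: maximal_ideal_def)
qed
lemma M_nonunit: "m \<in> M \<Longrightarrow> m \<noteq> 0 \<Longrightarrow> inverse m \<notin> V"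
  using M_mult[of "inverse m" m] one_notin_M by auto

lemma unit_notin_M:
  assumes x: "x \<in> V" "x \<notin> M" shows "x \<noteq> 0 \<and> inverse x \<in> V"
proof -
  let ?N = "{x\<in>V. x = 0 \<or> inverse x \<notin> V}"
  have N: "ideal ?N V" by (rule valuation_nonunits_ideal[OF V])
  have MN: "M \<subseteq> ?N" using M_nonunit MV by auto
  have "?N = M \<or> ?N = V" using M N MN by (auto simp: maximal_ideal_def)
  moreover have "1 \<notin> ?N" using Vs by (simp add: subring_1)
  moreover have "1 \<in> V" using Vs by (simp add: subring_1)
  ultimately have "?N = M" by blast
  then show ?thesis using x by auto
qed

lemma K_V: "k \<in> K \<Longrightarrow> k \<in> V" using KV by auto
lemma KM: "k \<in> K \<Longrightarrow> k \<in> M \<Longrightarrow> k = 0"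
  using M_nonunit[of k] K_inv[of k] KV by auto

definition pi :: "'a \<Rightarrow> 'a" where "pi x = (SOME k. k \<in> K \<and> x - k \<in> M)"

lemma pi: assumes "x \<in> V" shows "pi x \<in> K" "x - pi x \<in> M"
proof -
  obtain k m where "x = k + m" "k \<in> K" "m \<in> M" using assms VKM by auto
  then have "\<exists>k. k \<in> K \<and> x - k \<in> M" by auto
  then have "pi x \<in> K \<and> x - pi x \<in> M" unfolding pi_def by (rule someI_ex)
  then show "pi x \<in> K" "x - pi x \<in> M" by auto
qed

lemma pi_unique: assumes k: "k \<in> K" and xk: "x - k \<in> M" shows "pi x = k"
proof -
  have x: "x \<in> V" using k xk MV KV Vs subring_add[OF Vs, of "x - k" k] by auto
  have "pi x - k = (x - k) - (x - pi x)" by simp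
  also have "\<dots> \<in> M" using M_diff[OF xk pi(2)[OF x]] .
  finally have "pi x - k \<in> M" .
  moreover have "pi x - k \<in> K" using subring_diff[OF Ks] pi(1)[OF x] k by simp
  ultimately show ?thesis using KM by force
qed

lemma pi_K: "k \<in> K \<Longrightarrow> pi k = k" using pi_unique M_0 by simp
lemma pi_M: "m \<in> M \<Longrightarrow> pi m = 0" using pi_unique[of 0 m] Ks by (simp add: subring_0)
lemma pi_KM: "k \<in> K \<Longrightarrow> m \<in> M \<Longrightarrow> pi (k + m) = k" using pi_unique by simp
lemma pi_0: "pi 0 = 0" using pi_K Ks subring_0 by blast
lemma pi_1: "pi 1 = 1" using pi_K Ks subring_1 by blast
lemma pi_add: assumes "x \<in> V" "y \<in> V" shows "pi (x + y) = pi x + pi y"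
proof (rule pi_unique)
  show "pi x + pi y \<in> K" using pi assms Ks subring_add by blast
  have e: "x + y - (pi x + pi y) = (x - pi x) + (y - pi y)" by simp
  show "x + y - (pi x + pi y) \<in> M" unfolding e by (rule M_add[OF pi(2)[OF assms(1)] pi(2)[OF assms(2)]])
qed
lemma pi_mult: assumes x: "x \<in> V" and y: "y \<in> V" shows "pi (x * y) = pi x * pi y"
proof (rule pi_unique)
  show "pi x * pi y \<in> K" using pi assms Ks subring_mult by blast
  have e: "x * y - (pi x * pi y) = (x - pi x) * y + pi x * (y - pi y)" by (simp add: algebra_simps)
  have 1: "(x - pi x) * y \<in> M" using M_mult2 pi(2)[OF x] y by blast
  have 2: "pi x * (y - pi y) \<in> M" using M_mult pi(2)[OF y] pi(1)[OF x] KV by blast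
  show "x * y - (pi x * pi y) \<in> M" unfolding e by (rule M_add[OF 1 2])
qed
lemma pi_uminus: assumes x: "x \<in> V" shows "pi (- x) = - pi x"
proof (rule pi_unique)
  show "- pi x \<in> K" using pi(1)[OF x] Ks subring_uminus by blast
  show "- x - - pi x \<in> M" using M_uminus[OF pi(2)[OF x]] by simp
qed
lemma pi_pow: "x \<in> V \<Longrightarrow> pi (x ^ n) = pi x ^ n"
  by (induct n) (auto simp: pi_1 pi_mult subring_pow[OF Vs])
lemma pi_inv: assumes x: "x \<in> V" "x \<notin> M" shows "pi (inverse x) = inverse (pi x)"
proof -
  have u: "x \<noteq> 0" "inverse x \<in> V" using unit_notin_M[OF x] by auto
  have "pi x * pi (inverse x) = 1" using pi_mult[OF x(1) u(2)] u pi_1 by simp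
  then show ?thesis by (metis inverse_unique)
qed
lemma pi_zero_iff: "x \<in> V \<Longrightarrow> pi x = 0 \<longleftrightarrow> x \<in> M"
  using pi(2)[of x] pi_M by auto
lemma V_decomp: "x \<in> V \<Longrightarrow> x = pi x + (x - pi x)" by simp

lemma M_ne: obtains m where "m \<in> M" "m \<noteq> 0" using M0 M_0 by blast

end



context setting begin

definition R :: "'a set" where "R = {d + m | d m. d \<in> D \<and> m \<in> M}"

lemma R_char: "R = {x \<in> V. pi x \<in> D}"
proof
  show "R \<subseteq> {x \<in> V. pi x \<in> D}"
  proof
    fix x assume "x \<in> R"
    then obtain d m where x: "x = d + m" "d \<in> D" "m \<in> M" by (auto simp: R_def)
    have "x \<in> V" using x DK KV MV subring_add[OF Vs] by blast
    moreover have "pi x = d" using x DK pi_KM by blast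
    ultimately show "x \<in> {x \<in> V. pi x \<in> D}" using x by simp
  qed
  show "{x \<in> V. pi x \<in> D} \<subseteq> R"
  proof
    fix x assume x: "x \<in> {x \<in> V. pi x \<in> D}"
    then have "x = pi x + (x - pi x)" "x - pi x \<in> M" using pi by auto
    then show "x \<in> R" using x unfolding R_def by blast
  qed
qed

lemma RV: "R \<subseteq> V" by (auto simp: R_char)
lemma MR: "M \<subseteq> R" using MV pi_M D subring_0 by (auto simp: R_char)
lemma DR: "D \<subseteq> R" using DK KV pi_K by (auto simp: R_char)
lemma RK: "x \<in> R \<Longrightarrow> x \<in> K \<Longrightarrow> x \<in> D" using pi_K by (auto simp: R_char)
lemma Rs: "subring R"
  unfolding subring_def R_char
  using Vs D pi_0 pi_1 pi_add pi_mult pi_uminus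
  by (simp add: subring_0 subring_1 subring_add subring_mult subring_uminus)
lemma R_mult_M: "r \<in> R \<Longrightarrow> m \<in> M \<Longrightarrow> r * m \<in> M" using RV M_mult by blast
lemma R_eq_V_iff: "R = V \<longleftrightarrow> D = K"
proof
  assume "R = V"
  then have "K \<subseteq> D" using RK KV by blast
  then show "D = K" using DK by blast
next
  assume h: "D = K"
  show "R = V" unfolding R_char using pi h by auto
qed

lemma frac_R: "frac_field R = UNIV"
proof -
  obtain m where m: "m \<in> M" "m \<noteq> 0" by (rule M_ne)
  have "x \<in> frac_field R" for x
  proof -
    have "x \<in> frac_field V" using VL by simp
    then obtain a b where ab: "x = a / b" "a \<in> V" "b \<in> V" "b \<noteq> 0" by (auto simp: frac_field_def)
    have "x = (a * m) / (b * m)" using ab m by simp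
    moreover have "a * m \<in> R" "b * m \<in> R" using ab m M_mult MR by auto
    moreover have "b * m \<noteq> 0" using ab m by simp
    ultimately show ?thesis unfolding frac_field_def by blast
  qed
  then show ?thesis by auto
qed

lemma principal_M_imp_V:
  assumes S: "subring S" and MS: "M \<subseteq> S" and SV: "S \<subseteq> V"
    and pr: "\<forall>I. ideal I S \<longrightarrow> (\<exists>a\<in>S. I = (\<lambda>s. a * s) ` S)"
  shows "S = V"
proof -
  have "ideal M S" unfolding ideal_def using MS M_0 M_add M_mult SV by blast
  then obtain a where a: "a \<in> S" "M = (\<lambda>s. a * s) ` S" using pr by blast
  have "a \<in> M" using a S subring_1 by force
  have a0: "a \<noteq> 0" using a M0 by auto
  have "V \<subseteq> S"
  proof
    fix v assume v: "v \<in> V"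
    have "a * v \<in> M" using M_mult2[OF v \<open>a \<in> M\<close>] .
    then obtain s where "s \<in> S" "a * v = a * s" using a by auto
    then show "v \<in> S" using a0 by simp
  qed
  then show ?thesis using SV by blast
qed

lemma DVR_R: "DVR R \<Longrightarrow> R = V"
  by (rule principal_M_imp_V) (use Rs MR RV in \<open>auto simp: DVR_def\<close>)

lemma rational_R: assumes rv: "rational_valuation_domain R" shows "D = K"
proof (rule ccontr)
  assume "D \<noteq> K"
  then obtain k where k: "k \<in> K" "k \<notin> D" using DK by blast
  have kR: "k \<notin> R" using k RK by blast
  have k0: "k \<noteq> 0" using k D subring_0 by blast
  obtain m where m: "m \<in> M" "m \<noteq> 0" by (rule M_ne)
  have kV: "k \<in> V" using k KV by blast
  have vR: "\<And>a b. a \<in> R \<Longrightarrow> b \<in> R \<Longrightarrow> (\<exists>c\<in>R. b = a * c) \<or> (\<exists>c\<in>R. a = b * c)"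
    using rv by (simp add: rational_valuation_domain_def valuation_domain_def)
  have kmR: "k * m \<in> R" using M_mult[OF kV m(1)] MR by blast
  have mR: "m \<in> R" using m MR by blast
  have "inverse k \<in> R"
  proof -
    from vR[OF kmR mR] show ?thesis
    proof
      assume "\<exists>c\<in>R. m = k * m * c"
      then obtain c where c: "c \<in> R" "m = k * m * c" by blast
      then have "k * c = 1" using m(2) by (metis mult.assoc mult.commute mult_cancel_left1)
      then have "c = inverse k" by (metis inverse_unique)
      then show ?thesis using c by simp
    next
      assume "\<exists>c\<in>R. k * m = m * c"
      then obtain c where c: "c \<in> R" "k * m = m * c" by blast
      then have "k = c" using m(2) by (simp add: mult.commute)
      then show ?thesis using c kR by simp
    qed
  qed
  then have wD: "inverse k \<in> D" using RK K_inv k by blast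
  from rv frac_R obtain v :: "'a \<Rightarrow> rat" where
    A: "\<forall>x\<in>UNIV - {0}. \<forall>y\<in>UNIV - {0}. v (x * y) = v x + v y" and
    B: "\<forall>x\<in>UNIV - {0}. 0 \<le> v x \<longleftrightarrow> x \<in> R"
    unfolding rational_valuation_domain_def by auto
  have vm: "\<And>x y. x \<noteq> 0 \<Longrightarrow> y \<noteq> 0 \<Longrightarrow> v (x * y) = v x + v y" using A by blast
  have vp: "\<And>x. x \<noteq> 0 \<Longrightarrow> 0 \<le> v x \<longleftrightarrow> x \<in> R" using B by blast
  have v1: "v 1 = 0" using vm[of 1 1] by simp
  have "v k + v (inverse k) = 0" using vm[of k "inverse k"] k0 v1 by simp
  moreover have "v k < 0" using vp[OF k0] kR by simp
  ultimately have vw: "v (inverse k) > 0" by simp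
  have pw: "v (m * k ^ n) = v m + of_nat n * v k" for n
  proof (induct n)
    case 0 then show ?case by simp
  next
    case (Suc n)
    have "m * k ^ Suc n = (m * k ^ n) * k" by (simp add: mult.assoc)
    then have "v (m * k ^ Suc n) = v (m * k ^ n) + v k" using vm m(2) k0 by simp
    then show ?case using Suc by (simp add: algebra_simps)
  qed
  have ge: "v m \<ge> of_nat n * v (inverse k)" for n
  proof -
    have "m * k ^ n \<in> M" using M_mult2[OF subring_pow[OF Vs kV] m(1)] .
    then have "m * k ^ n \<in> R" using MR by blast
    then have "0 \<le> v (m * k ^ n)" using vp m(2) k0 by simp
    then have h1: "0 \<le> v m + of_nat n * v k" using pw[of n] by simp
    have vk: "v k = - v (inverse k)" using \<open>v k + v (inverse k) = 0\<close> by linarith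
    have "of_nat n * v k = - (of_nat n * v (inverse k))" by (simp add: vk)
    then show ?thesis using h1 by linarith
  qed
  obtain n where "v m < of_nat n * v (inverse k)" using ex_less_of_nat_mult[OF vw] by blast
  then show False using ge[of n] by simp
qed

lemma ideal_M_R: "ideal M R"
  unfolding ideal_def using MR M_0 M_add R_mult_M by blast

lemma V_int_closed: assumes x: "isint V x" shows "x \<in> V"
proof (rule ccontr)
  assume xV: "x \<notin> V"
  have x0: "x \<noteq> 0" using xV Vs subring_0 by auto
  have "x \<in> frac_field V" using VL by simp
  then obtain a b where ab: "x = a / b" "a \<in> V" "b \<in> V" "b \<noteq> 0" by (auto simp: frac_field_def)
  have zV: "inverse x \<in> V"
  proof -
    from val[OF ab(2) ab(3)] show ?thesis
    proof
      assume "\<exists>c\<in>V. b = a * c"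
      then obtain c where c: "c \<in> V" "b = a * c" by blast
      have a0: "a \<noteq> 0" using ab x0 by auto
      have "x = a / (a * c)" using ab c by simp
      also have "\<dots> = inverse c" using a0 by (simp add: divide_inverse inverse_mult_distrib)
      finally have "inverse x = c" by simp
      then show ?thesis using c by simp
    next
      assume "\<exists>c\<in>V. a = b * c"
      then obtain c where c: "c \<in> V" "a = b * c" by blast
      then have "x = c" using ab by simp
      then show ?thesis using c xV by simp
    qed
  qed
  define z where "z = inverse x"
  have zM: "z \<in> M"
  proof (rule ccontr)
    assume "z \<notin> M"
    then have "inverse z \<in> V" using unit_notin_M zV z_def by blast
    then show False using xV by (simp add: z_def)
  qed
  obtain p where p1: "lead_coeff p = 1" and p2: "\<forall>i. coeff p i \<in> V" and p3: "poly p x = 0"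
    using x unfolding isint_def by blast
  define k where "k = degree p"
  have k1: "k \<ge> 1" using monic_root_deg[OF p1 p3] by (simp add: k_def)
  have ps: "(\<Sum>j<k. coeff p j * x ^ j) + x ^ k = 0" using monic_split[OF p1, of x] p3 by (simp add: k_def)
  have xz: "x * z = 1" using x0 by (simp add: z_def)
  have e: "x ^ j * z ^ k = z ^ (k - j)" if "j < k" for j
  proof -
    have "z ^ k = z ^ j * z ^ (k - j)" using that by (simp add: power_add[symmetric])
    then have "x ^ j * z ^ k = (x * z) ^ j * z ^ (k - j)" by (simp add: power_mult_distrib)
    then show ?thesis using xz by simp
  qed
  have "0 = ((\<Sum>j<k. coeff p j * x ^ j) + x ^ k) * z ^ k" using ps by simp
  also have "\<dots> = (\<Sum>j<k. coeff p j * (x ^ j * z ^ k)) + (x * z) ^ k"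
  proof -
    have "(\<Sum>j<k. coeff p j * x ^ j) * z ^ k = (\<Sum>j<k. coeff p j * (x ^ j * z ^ k))"
      by (simp add: sum_distrib_right mult.assoc)
    moreover have "x ^ k * z ^ k = (x * z) ^ k" by (simp add: power_mult_distrib)
    ultimately show ?thesis by (simp add: distrib_right)
  qed
  also have "\<dots> = (\<Sum>j<k. coeff p j * z ^ (k - j)) + 1" using e xz by simp
  finally have one: "1 = - (\<Sum>j<k. coeff p j * z ^ (k - j))" by (simp add: eq_neg_iff_add_eq_0 add.commute)
  have "(\<Sum>j<k. coeff p j * z ^ (k - j)) \<in> M"
  proof (rule ideal_sum[OF Mi])
    fix j assume "j \<in> {..<k}"
    then have "z ^ (k - j) = z * z ^ (k - j - 1)" by (metis Suc_diff_Suc lessThan_iff power_Suc diff_Suc_1 diff_diff_left)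
    moreover have "z * z ^ (k - j - 1) \<in> M" using M_mult2[OF subring_pow[OF Vs zV[folded z_def]] zM] .
    ultimately show "coeff p j * z ^ (k - j) \<in> M" using M_mult p2 by simp
  qed
  then have "1 \<in> M" using one M_uminus by metis
  then show False using one_notin_M by simp
qed

lemma pi_poly:
  assumes "\<forall>i. coeff p i \<in> V" and x: "x \<in> V"
  shows "poly (map_poly pi p) (pi x) = pi (poly p x) \<and> poly p x \<in> V"
  using assms(1)
proof (induct p rule: pCons_induct)
  case 0 then show ?case using pi_0 Vs subring_0 by simp
next
  case (pCons a p)
  have a: "a \<in> V" using pCons.prems by (metis coeff_pCons_0)
  have "\<forall>i. coeff p i \<in> V" using pCons.prems by (metis coeff_pCons_Suc)
  then have IH: "poly (map_poly pi p) (pi x) = pi (poly p x)" "poly p x \<in> V" using pCons.hyps by auto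
  have xp: "x * poly p x \<in> V" using IH x Vs subring_mult by blast
  have "poly (map_poly pi (pCons a p)) (pi x) = pi a + pi x * pi (poly p x)"
    using IH by (simp add: Polynomial.map_poly_pCons[of pi, OF pi_0])
  also have "\<dots> = pi (poly (pCons a p) x)" using a x IH xp by (simp add: pi_add pi_mult)
  finally show ?case using a xp Vs subring_add by auto
qed

lemma isint_pi: assumes x: "isint R x" "x \<in> V" shows "isint D (pi x)"
proof -
  obtain p where p1: "lead_coeff p = 1" and p2: "\<forall>i. coeff p i \<in> R" and p3: "poly p x = 0"
    using x unfolding isint_def by blast
  have pV: "\<forall>i. coeff p i \<in> V" using p2 RV by blast
  have "lead_coeff (map_poly pi p) = 1" using lead_coeff_map_poly_nz[of pi p] p1 pi_0 pi_1 by simp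
  moreover have "\<forall>i. coeff (map_poly pi p) i \<in> D" using p2 by (simp add: coeff_map_poly pi_0 R_char)
  moreover have "poly (map_poly pi p) (pi x) = 0" using pi_poly[OF pV x(2)] p3 pi_0 by simp
  ultimately show ?thesis unfolding isint_def by blast
qed

lemma Rbar_V: "isint R x \<Longrightarrow> x \<in> V" using V_int_closed isint_mono RV by blast
lemma Rbar_pi: "isint R x \<Longrightarrow> isint D (pi x)" using isint_pi Rbar_V by blast

lemma root7: "root_ext R {x. isint R x} \<longleftrightarrow> root_ext D {x \<in> K. isint D x}"
proof
  assume h: "root_ext R {x. isint R x}"
  show "root_ext D {x \<in> K. isint D x}" unfolding root_ext_def
  proof (intro conjI ballI)
    show "D \<subseteq> {x \<in> K. isint D x}" using DK isint_mem D by blast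
    fix s assume s: "s \<in> {x \<in> K. isint D x}"
    then have "isint R s" using isint_mono DR by blast
    then obtain n where "n \<ge> 1" "s ^ n \<in> R" using h by (auto simp: root_ext_def)
    moreover have "s ^ n \<in> K" using s subring_pow[OF Ks] by blast
    ultimately show "\<exists>n\<ge>1. s ^ n \<in> D" using RK by blast
  qed
next
  assume h: "root_ext D {x \<in> K. isint D x}"
  show "root_ext R {x. isint R x}" unfolding root_ext_def
  proof (intro conjI ballI)
    show "R \<subseteq> {x. isint R x}" using isint_mem Rs by blast
    fix s assume s: "s \<in> {x. isint R x}"
    then have sV: "s \<in> V" and "isint D (pi s)" using Rbar_V Rbar_pi by auto
    moreover have "pi s \<in> K" using pi sV by blast
    ultimately obtain n where "n \<ge> 1" "pi s ^ n \<in> D" using h by (auto simp: root_ext_def)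
    then show "\<exists>n\<ge>1. s ^ n \<in> R" using sV pi_pow subring_pow[OF Vs] by (auto simp: R_char)
  qed
qed

lemma broot7: "bounded_root_ext R {x. isint R x} \<longleftrightarrow> bounded_root_ext D {x \<in> K. isint D x}"
proof
  assume h: "bounded_root_ext R {x. isint R x}"
  then obtain n where n: "n \<ge> 1" "\<forall>s. isint R s \<longrightarrow> s ^ n \<in> R" by (auto simp: bounded_root_ext_def)
  show "bounded_root_ext D {x \<in> K. isint D x}" unfolding bounded_root_ext_def
  proof (intro conjI)
    show "D \<subseteq> {x \<in> K. isint D x}" using DK isint_mem D by blast
    show "\<exists>n\<ge>1. \<forall>s\<in>{x \<in> K. isint D x}. s ^ n \<in> D"
      using n isint_mono DR RK subring_pow[OF Ks] by blast
  qed
next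
  assume h: "bounded_root_ext D {x \<in> K. isint D x}"
  then obtain n where n: "n \<ge> 1" "\<forall>s. s \<in> K \<and> isint D s \<longrightarrow> s ^ n \<in> D" by (auto simp: bounded_root_ext_def)
  show "bounded_root_ext R {x. isint R x}" unfolding bounded_root_ext_def
  proof (intro conjI)
    show "R \<subseteq> {x. isint R x}" using isint_mem Rs by blast
    have "s ^ n \<in> R" if s: "isint R s" for s
    proof -
      have sV: "s \<in> V" and "isint D (pi s)" using Rbar_V Rbar_pi s by auto
      moreover have "pi s \<in> K" using pi sV by blast
      ultimately have "pi s ^ n \<in> D" using n by blast
      then show ?thesis using sV pi_pow subring_pow[OF Vs] by (auto simp: R_char)
    qed
    then show "\<exists>n\<ge>1. \<forall>s\<in>{x. isint R x}. s ^ n \<in> R" using n by blast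
  qed
qed

end



context setting begin

lemma frac_intro: "a \<in> S \<Longrightarrow> b \<in> S \<Longrightarrow> b \<noteq> 0 \<Longrightarrow> a / b \<in> frac_field S"
  unfolding frac_field_def by blast

definition Pp :: bool where
  "Pp \<longleftrightarrow> (\<forall>k\<in>K. k \<noteq> 0 \<longrightarrow> (\<exists>n\<ge>1. k ^ n \<in> D) \<or> (\<exists>n\<ge>1. inverse k ^ n \<in> D))"

lemma K_div: "a \<in> K \<Longrightarrow> b \<in> K \<Longrightarrow> a / b \<in> K"
  using K_inv Ks subring_mult by (metis divide_inverse)
lemma inv_pow_K: "k \<in> K \<Longrightarrow> inverse k ^ n \<in> K" using K_inv subring_pow[OF Ks] by blast
lemma pow_K: "k \<in> K \<Longrightarrow> k ^ n \<in> K" using subring_pow[OF Ks] by blast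

lemma AV_R_Pp: assumes av: "AV_domain R" shows Pp
  unfolding Pp_def
proof (intro ballI impI)
  fix k assume k: "k \<in> K" "k \<noteq> 0"
  obtain m where m: "m \<in> M" "m \<noteq> 0" by (rule M_ne)
  have kV: "k \<in> V" using k KV by blast
  have a: "k * m \<in> R" "k * m \<noteq> 0" using M_mult[OF kV m(1)] MR k m by auto
  have b: "m \<in> R" using m MR by blast
  from av a b m obtain n where n: "n \<ge> 1"
    and h: "(\<exists>c\<in>R. m ^ n = (k * m) ^ n * c) \<or> (\<exists>c\<in>R. (k * m) ^ n = m ^ n * c)"
    unfolding AV_domain_def by blast
  from h show "(\<exists>n\<ge>1. k ^ n \<in> D) \<or> (\<exists>n\<ge>1. inverse k ^ n \<in> D)"
  proof
    assume "\<exists>c\<in>R. m ^ n = (k * m) ^ n * c"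
    then obtain c where c: "c \<in> R" "m ^ n = (k * m) ^ n * c" by blast
    then have "k ^ n * c = 1" using m(2) by (simp add: power_mult_distrib algebra_simps)
    then have "c = inverse k ^ n" by (metis inverse_unique power_inverse)
    then have "inverse k ^ n \<in> D" using c RK inv_pow_K k by blast
    then show ?thesis using n by blast
  next
    assume "\<exists>c\<in>R. (k * m) ^ n = m ^ n * c"
    then obtain c where c: "c \<in> R" "(k * m) ^ n = m ^ n * c" by blast
    then have "c = k ^ n" using m(2) by (simp add: power_mult_distrib algebra_simps)
    then have "k ^ n \<in> D" using c RK pow_K k by blast
    then show ?thesis using n by blast
  qed
qed

lemma Pp_AV_aux:
  assumes P: Pp and a: "a \<in> R" "a \<noteq> 0" and b: "b \<in> R" and c: "c \<in> V" "b = a * c"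
  shows "\<exists>n\<ge>1. (\<exists>c\<in>R. b ^ n = a ^ n * c) \<or> (\<exists>c\<in>R. a ^ n = b ^ n * c)"
proof (cases "c \<in> M")
  case True
  then show ?thesis using c MR by (intro exI[of _ 1]) auto
next
  case False
  have cu: "c \<noteq> 0" "inverse c \<in> V" using unit_notin_M[OF c(1) False] by auto
  have k: "pi c \<in> K" "pi c \<noteq> 0" using pi c(1) False pi_zero_iff by auto
  from P k obtain n where n: "n \<ge> 1" and h: "pi c ^ n \<in> D \<or> inverse (pi c) ^ n \<in> D"
    unfolding Pp_def by blast
  from h show ?thesis
  proof
    assume "pi c ^ n \<in> D"
    then have "c ^ n \<in> R" using pi_pow c(1) subring_pow[OF Vs] by (auto simp: R_char)
    moreover have "b ^ n = a ^ n * c ^ n" using c by (simp add: power_mult_distrib)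
    ultimately show ?thesis using n by blast
  next
    assume "inverse (pi c) ^ n \<in> D"
    then have "inverse c ^ n \<in> R" using pi_pow[OF cu(2)] pi_inv[OF c(1) False] subring_pow[OF Vs cu(2)]
      by (auto simp: R_char)
    moreover have "a ^ n = b ^ n * inverse c ^ n" using c cu
      by (simp add: power_mult_distrib power_inverse[symmetric] field_simps)
    ultimately show ?thesis using n by blast
  qed
qed

lemma Pp_AV_R: assumes P: Pp shows "AV_domain R"
  unfolding AV_domain_def
proof (intro conjI Rs ballI impI)
  fix a b assume a: "a \<in> R" and b: "b \<in> R" and ab: "a \<noteq> 0 \<and> b \<noteq> 0"
  have aV: "a \<in> V" and bV: "b \<in> V" using a b RV by auto
  from val[OF aV bV] show "\<exists>n\<ge>1. (\<exists>c\<in>R. b ^ n = a ^ n * c) \<or> (\<exists>c\<in>R. a ^ n = b ^ n * c)"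
  proof
    assume "\<exists>c\<in>V. b = a * c"
    then show ?thesis using Pp_AV_aux[OF P a _ b] ab by blast
  next
    assume "\<exists>c\<in>V. a = b * c"
    then obtain c where "c \<in> V" "a = b * c" by blast
    then have "\<exists>n\<ge>1. (\<exists>c\<in>R. a ^ n = b ^ n * c) \<or> (\<exists>c\<in>R. b ^ n = a ^ n * c)"
      using Pp_AV_aux[OF P b _ a] ab by blast
    then show ?thesis by blast
  qed
qed

definition Dt :: "'a set" where "Dt = {x \<in> K. isint D x}"

lemma D_Dt: "D \<subseteq> Dt" using DK isint_mem D by (auto simp: Dt_def)
lemma Dt_K: "Dt \<subseteq> K" by (auto simp: Dt_def)

lemma Pp_Dt_root: assumes P: Pp and x: "x \<in> Dt" shows "\<exists>n\<ge>1. x ^ n \<in> D"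
proof (cases "x = 0")
  case True then show ?thesis using D subring_0 by (intro exI[of _ 1]) auto
next
  case False
  from P x False obtain n where n: "n \<ge> 1" and h: "x ^ n \<in> D \<or> inverse x ^ n \<in> D"
    unfolding Pp_def Dt_def by blast
  have "isint D x" using x by (simp add: Dt_def)
  then have "x ^ n \<in> D" using h isint_inv_pow[OF D _ False] by blast
  then show ?thesis using n by blast
qed

lemma root_Dt: "x \<in> K \<Longrightarrow> n \<ge> 1 \<Longrightarrow> x ^ n \<in> D \<Longrightarrow> x \<in> Dt"
  using isint_root[OF D] by (auto simp: Dt_def)

lemma Pp_Dt_inv: assumes P: Pp and k: "k \<in> K" "k \<noteq> 0" shows "k \<in> Dt \<or> inverse k \<in> Dt"
  using P k root_Dt K_inv unfolding Pp_def by (metis power_inverse)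

lemma Pp_Dt_mult: assumes P: Pp and x: "x \<in> Dt" and y: "y \<in> Dt" shows "x * y \<in> Dt"
proof -
  obtain n where n: "n \<ge> 1" "x ^ n \<in> D" using Pp_Dt_root[OF P x] by blast
  obtain m where m: "m \<ge> 1" "y ^ m \<in> D" using Pp_Dt_root[OF P y] by blast
  have "(x * y) ^ (n * m) = (x ^ n) ^ m * (y ^ m) ^ n"
    by (simp add: power_mult_distrib power_mult[symmetric] mult.commute)
  also have "\<dots> \<in> D" using n m D by (simp add: subring_mult subring_pow)
  finally have "(x * y) ^ (n * m) \<in> D" .
  moreover have "x * y \<in> K" using x y Dt_K Ks subring_mult by blast
  moreover have "n * m \<ge> 1" using n m by simp
  ultimately show ?thesis using root_Dt by blast
qed

lemma Pp_Dt_add: assumes P: Pp and x: "x \<in> Dt" and y: "y \<in> Dt" shows "x + y \<in> Dt"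
proof -
  have gen: "x + y \<in> Dt" if x: "x \<in> Dt" "x \<noteq> 0" and y: "y \<in> Dt" and c: "y / x \<in> Dt" for x y
  proof -
    obtain n where n: "n \<ge> 1" "(y / x) ^ n \<in> D" using Pp_Dt_root[OF P c] by blast
    have "isint D (1 + y / x)" using isint_shift1[OF D n] .
    moreover have "1 + y / x \<in> K" using c Dt_K Ks subring_add subring_1 by blast
    ultimately have "1 + y / x \<in> Dt" by (simp add: Dt_def)
    then have "x * (1 + y / x) \<in> Dt" using Pp_Dt_mult[OF P x(1)] by blast
    moreover have "x * (1 + y / x) = x + y" using x(2) by (simp add: field_simps)
    ultimately show ?thesis by simp
  qed
  show ?thesis
  proof (cases "x = 0 \<or> y = 0")
    case True then show ?thesis using x y by auto
  next
    case False
    have "y / x \<in> K" using x y Dt_K K_inv Ks subring_mult by (metis divide_inverse subsetD)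
    moreover have "y / x \<noteq> 0" using False by simp
    ultimately have "y / x \<in> Dt \<or> inverse (y / x) \<in> Dt" using Pp_Dt_inv[OF P] by blast
    then show ?thesis
    proof
      assume "y / x \<in> Dt" then show ?thesis using gen x y False by blast
    next
      assume "inverse (y / x) \<in> Dt"
      then have "x / y \<in> Dt" by simp
      then have "y + x \<in> Dt" using gen y x False by blast
      then show ?thesis by (simp add: add.commute)
    qed
  qed
qed

lemma Pp_Dt_subring: assumes P: Pp shows "subring Dt"
proof -
  have "- x \<in> Dt" if x: "x \<in> Dt" for x
  proof -
    have "- 1 \<in> Dt" using D_Dt D subring_uminus subring_1 by blast
    then show ?thesis using Pp_Dt_mult[OF P _ x] by fastforce
  qed
  moreover have z: "0 \<in> Dt" "1 \<in> Dt" using D_Dt D subring_0 subring_1 by blast+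
  ultimately show ?thesis unfolding subring_def
    using Pp_Dt_add[OF P] Pp_Dt_mult[OF P] by simp
qed

lemma Pp_Dt_val: assumes P: Pp shows "valuation_domain Dt"
  unfolding valuation_domain_def
proof (intro conjI Pp_Dt_subring[OF P] ballI)
  fix a b assume a: "a \<in> Dt" and b: "b \<in> Dt"
  have z: "0 \<in> Dt" using D_Dt D subring_0 by blast
  show "(\<exists>c\<in>Dt. b = a * c) \<or> (\<exists>c\<in>Dt. a = b * c)"
  proof (cases "a = 0 \<or> b = 0")
    case True then show ?thesis using z by auto
  next
    case False
    have "b / a \<in> K" using a b Dt_K K_inv Ks subring_mult by (metis divide_inverse subsetD)
    moreover have "b / a \<noteq> 0" using False by simp
    ultimately have "b / a \<in> Dt \<or> a / b \<in> Dt" using Pp_Dt_inv[OF P] by fastforce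
    moreover have "b = a * (b / a)" "a = b * (a / b)" using False by auto
    ultimately show ?thesis by metis
  qed
qed

lemma Pp_Dt_frac: assumes P: Pp shows "frac_field Dt = K"
proof
  show "frac_field Dt \<subseteq> K" unfolding frac_field_def
    using Dt_K K_div by blast
  show "K \<subseteq> frac_field Dt"
  proof
    fix k assume k: "k \<in> K"
    have one: "1 \<in> Dt" using D_Dt D subring_1 by blast
    show "k \<in> frac_field Dt"
    proof (cases "k = 0")
      case True then show ?thesis using one D_Dt D subring_0 unfolding frac_field_def by force
    next
      case False
      then have "k \<in> Dt \<or> inverse k \<in> Dt" using Pp_Dt_inv[OF P k] by blast
      moreover have "k = k / 1" "k = 1 / inverse k" by (simp_all add: divide_inverse)
      moreover have "inverse k \<noteq> 0" using False by simp
      ultimately show ?thesis using one frac_intro[of _ Dt] by (metis one_neq_zero)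
    qed
  qed
qed

lemma Pp_Dt_rootext: assumes P: Pp shows "root_ext D Dt"
  unfolding root_ext_def using D_Dt Pp_Dt_root[OF P] by blast

lemma Dt_Pp: assumes v: "valuation_domain Dt" and f: "frac_field Dt = K" and r: "root_ext D Dt"
  shows Pp
  unfolding Pp_def
proof (intro ballI impI)
  fix k assume k: "k \<in> K" "k \<noteq> 0"
  then have "k \<in> frac_field Dt" using f by simp
  then obtain a b where ab: "k = a / b" "a \<in> Dt" "b \<in> Dt" "b \<noteq> 0" unfolding frac_field_def by blast
  have a0: "a \<noteq> 0" using ab k by auto
  from v ab have "(\<exists>c\<in>Dt. b = a * c) \<or> (\<exists>c\<in>Dt. a = b * c)" by (simp add: valuation_domain_def)
  then show "(\<exists>n\<ge>1. k ^ n \<in> D) \<or> (\<exists>n\<ge>1. inverse k ^ n \<in> D)"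
  proof
    assume "\<exists>c\<in>Dt. b = a * c"
    then obtain c where c: "c \<in> Dt" "b = a * c" by blast
    have "k = a / (a * c)" using ab c by simp
    also have "\<dots> = inverse c" using a0 by (simp add: divide_inverse inverse_mult_distrib)
    finally have "inverse k = c" by simp
    then show ?thesis using r c by (auto simp: root_ext_def)
  next
    assume "\<exists>c\<in>Dt. a = b * c"
    then obtain c where c: "c \<in> Dt" "a = b * c" by blast
    then have "k = c" using ab by simp
    then show ?thesis using r c by (auto simp: root_ext_def)
  qed
qed

lemma frac_D_K: "frac_field D \<subseteq> K"
  unfolding frac_field_def using DK K_div by blast

lemma Pp_AV_D: assumes P: Pp shows "AV_domain D \<and> root_ext (frac_field D) K"
proof
  show "AV_domain D" unfolding AV_domain_def
  proof (intro conjI D ballI impI)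
    fix a b assume a: "a \<in> D" and b: "b \<in> D" and ab: "a \<noteq> 0 \<and> b \<noteq> 0"
    have "b / a \<in> K" using a b DK K_inv Ks subring_mult by (metis divide_inverse subsetD)
    moreover have "b / a \<noteq> 0" using ab by simp
    ultimately obtain n where n: "n \<ge> 1" and h: "(b / a) ^ n \<in> D \<or> inverse (b / a) ^ n \<in> D"
      using P unfolding Pp_def by blast
    have "b ^ n = a ^ n * (b / a) ^ n" "a ^ n = b ^ n * inverse (b / a) ^ n" using ab
      by (simp_all add: power_divide power_inverse)
    then show "\<exists>n\<ge>1. (\<exists>c\<in>D. b ^ n = a ^ n * c) \<or> (\<exists>c\<in>D. a ^ n = b ^ n * c)"
      using n h by blast
  qed
  show "root_ext (frac_field D) K" unfolding root_ext_def
  proof (intro conjI frac_D_K ballI)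
    fix k assume k: "k \<in> K"
    have one: "1 \<in> D" using D subring_1 by blast
    show "\<exists>n\<ge>1. k ^ n \<in> frac_field D"
    proof (cases "k = 0")
      case True then show ?thesis using one D subring_0 unfolding frac_field_def
        by (intro exI[of _ 1]) force
    next
      case False
      then obtain n where n: "n \<ge> 1" and h: "k ^ n \<in> D \<or> inverse k ^ n \<in> D"
        using P k unfolding Pp_def by blast
      have "k ^ n = k ^ n / 1" "k ^ n = 1 / inverse k ^ n" by (simp_all add: power_inverse divide_inverse)
      moreover have "inverse k ^ n \<noteq> 0" using False by simp
      ultimately have "k ^ n \<in> frac_field D" using h one frac_intro[of _ D] by (metis one_neq_zero)
      then show ?thesis using n by blast
    qed
  qed
qed

lemma AV_D_Pp: assumes av: "AV_domain D" and r: "root_ext (frac_field D) K" shows Pp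
  unfolding Pp_def
proof (intro ballI impI)
  fix k assume k: "k \<in> K" "k \<noteq> 0"
  obtain n where n: "n \<ge> 1" "k ^ n \<in> frac_field D" using r k by (auto simp: root_ext_def)
  then obtain a b where ab: "k ^ n = a / b" "a \<in> D" "b \<in> D" "b \<noteq> 0" by (auto simp: frac_field_def)
  have a0: "a \<noteq> 0" using ab k by auto
  from av ab a0 obtain j where j: "j \<ge> 1"
    and h: "(\<exists>c\<in>D. b ^ j = a ^ j * c) \<or> (\<exists>c\<in>D. a ^ j = b ^ j * c)"
    unfolding AV_domain_def by blast
  have nj: "n * j \<ge> 1" using n j by simp
  from h show "(\<exists>n\<ge>1. k ^ n \<in> D) \<or> (\<exists>n\<ge>1. inverse k ^ n \<in> D)"
  proof
    assume "\<exists>c\<in>D. b ^ j = a ^ j * c"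
    then obtain c where c: "c \<in> D" "b ^ j = a ^ j * c" by blast
    have "inverse k ^ (n * j) = (b / a) ^ j" using ab by (simp add: power_mult power_inverse)
    also have "\<dots> = c" using c a0 by (simp add: power_divide)
    finally show ?thesis using c nj by blast
  next
    assume "\<exists>c\<in>D. a ^ j = b ^ j * c"
    then obtain c where c: "c \<in> D" "a ^ j = b ^ j * c" by blast
    have "k ^ (n * j) = (a / b) ^ j" using ab by (simp add: power_mult)
    also have "\<dots> = c" using c ab by (simp add: power_divide)
    finally show ?thesis using c nj by blast
  qed
qed

end



lemma ideal_prod_single: "a \<in> I \<Longrightarrow> b \<in> J \<Longrightarrow> a * b \<in> ideal_prod I J"
proof -
  assume a: "a \<in> I" and b: "b \<in> J"
  have "a * b = (\<Sum>i<(1::nat). (\<lambda>_. a) i * (\<lambda>_. b) i)" by simp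
  moreover have "\<forall>i<(1::nat). (\<lambda>_. a) i \<in> I \<and> (\<lambda>_. b) i \<in> J" using a b by simp
  show ?thesis unfolding ideal_prod_def
    apply (rule CollectI)
    apply (rule exI[of _ "1::nat"], rule exI[of _ "\<lambda>_. a"], rule exI[of _ "\<lambda>_. b"])
    using a b by simp
qed

lemma ideal_prod_sub:
  assumes T: "ideal T S" and h: "\<And>x y. x \<in> I \<Longrightarrow> y \<in> J \<Longrightarrow> x * y \<in> T"
  shows "ideal_prod I J \<subseteq> T"
proof
  fix z assume "z \<in> ideal_prod I J"
  then have "\<exists>(k::nat) (a::nat \<Rightarrow> 'a) b. z = (\<Sum>i<k. a i * b i) \<and> (\<forall>i<k. a i \<in> I \<and> b i \<in> J)"
    by (simp add: ideal_prod_def)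
  then obtain k :: nat and a b :: "nat \<Rightarrow> 'a" where z: "z = (\<Sum>i<k. a i * b i)" "\<forall>i<k. a i \<in> I \<and> b i \<in> J"
    by blast
  show "z \<in> T" unfolding z(1) by (rule ideal_sum[OF T]) (use z(2) h in auto)
qed

lemma ideal_INT:
  assumes "\<And>n. n \<in> A \<Longrightarrow> ideal (F n) S" and "A \<noteq> {}"
  shows "ideal (\<Inter>n\<in>A. F n) S"
proof -
  obtain n0 where n0: "n0 \<in> A" using assms(2) by blast
  have i: "\<And>n. n \<in> A \<Longrightarrow> F n \<subseteq> S \<and> 0 \<in> F n \<and> (\<forall>x\<in>F n. \<forall>y\<in>F n. x + y \<in> F n) \<and> (\<forall>x\<in>F n. \<forall>s\<in>S. s * x \<in> F n)"
    using assms(1) unfolding ideal_def by blast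
  show ?thesis unfolding ideal_def
  proof (intro conjI ballI)
    show "(\<Inter>n\<in>A. F n) \<subseteq> S" using i[OF n0] n0 by blast
    show "0 \<in> (\<Inter>n\<in>A. F n)" using i by blast
    fix x assume x: "x \<in> (\<Inter>n\<in>A. F n)"
    { fix y assume y: "y \<in> (\<Inter>n\<in>A. F n)"
      show "x + y \<in> (\<Inter>n\<in>A. F n)"
      proof
        fix n assume n: "n \<in> A" show "x + y \<in> F n" using i[OF n] x y n by blast
      qed }
    { fix s assume s: "s \<in> S"
      show "s * x \<in> (\<Inter>n\<in>A. F n)"
      proof
        fix n assume n: "n \<in> A" show "s * x \<in> F n" using i[OF n] x s n by blast
      qed }
  qed
qed

context setting begin

lemma principal_ideal_V: assumes c: "c \<in> V" shows "ideal ((\<lambda>v. c * v) ` V) V"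
  unfolding ideal_def
proof (intro conjI ballI)
  show "(\<lambda>v. c * v) ` V \<subseteq> V" using c Vs subring_mult by blast
  show "0 \<in> (\<lambda>v. c * v) ` V" using Vs subring_0 by force
  fix x y assume x: "x \<in> (\<lambda>v. c * v) ` V"
  then obtain u where u: "u \<in> V" "x = c * u" by blast
  { assume "y \<in> (\<lambda>v. c * v) ` V"
    then obtain w where w: "w \<in> V" "y = c * w" by blast
    have "x + y = c * (u + w)" using u w by (simp add: distrib_left)
    moreover have "u + w \<in> V" using u w Vs subring_add by blast
    ultimately show "x + y \<in> (\<lambda>v. c * v) ` V" by blast }
  { assume "y \<in> V"
    then have "y * u \<in> V" using u Vs subring_mult by blast
    moreover have "y * x = c * (y * u)" using u by (simp add: mult.left_commute)
    ultimately show "y * x \<in> (\<lambda>v. c * v) ` V" by blast }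
qed

abbreviation Mp :: "nat \<Rightarrow> 'a set" where "Mp n \<equiv> ideal_pow R M n"

lemma ideal_prod_M_R: "ideal_prod M R = M"
proof
  show "ideal_prod M R \<subseteq> M" by (rule ideal_prod_sub[OF Mi]) (use M_mult2 RV in blast)
  show "M \<subseteq> ideal_prod M R" using ideal_prod_single[of _ M 1 R] Rs subring_1 by fastforce
qed

lemma Mp1: "Mp (Suc 0) = M" by (simp add: ideal_prod_M_R)

lemma Mp_sub_M: "n \<ge> 1 \<Longrightarrow> Mp n \<subseteq> M"
proof (induct n)
  case 0 then show ?case by simp
next
  case (Suc n)
  show ?case
  proof (cases n)
    case 0 then show ?thesis using Mp1 by simp
  next
    case (Suc j)
    then have "Mp n \<subseteq> M" using Suc.hyps by simp
    then show ?thesis by (simp, intro ideal_prod_sub[OF Mi]) (use M_mult2 MV in blast)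
  qed
qed

lemma Mp_tV:
  assumes t: "t \<in> V" and Mt: "M = (\<lambda>v. t * v) ` V" and n: "n \<ge> 1"
  shows "Mp n = (\<lambda>v. t ^ n * v) ` V"
  using n
proof (induct n)
  case 0 then show ?case by simp
next
  case (Suc n)
  show ?case
  proof (cases n)
    case 0 then show ?thesis using Mp1 Mt by simp
  next
    case (Suc j)
    then have IH: "Mp n = (\<lambda>v. t ^ n * v) ` V" using Suc.hyps by simp
    have tM: "t \<in> M" using Mt Vs subring_1 by force
    have id: "ideal ((\<lambda>v. t ^ Suc n * v) ` V) V"
      by (rule principal_ideal_V) (use t Vs subring_pow in blast)
    show ?thesis
    proof
      show "Mp (Suc n) \<subseteq> (\<lambda>v. t ^ Suc n * v) ` V"
        unfolding ideal_pow.simps IH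
      proof (rule ideal_prod_sub[OF id])
        fix x y assume x: "x \<in> M" and y: "y \<in> (\<lambda>v. t ^ n * v) ` V"
        obtain u where u: "u \<in> V" "x = t * u" using x Mt by blast
        obtain w where w: "w \<in> V" "y = t ^ n * w" using y by blast
        have "x * y = t ^ Suc n * (u * w)" using u w by (simp add: algebra_simps)
        then show "x * y \<in> (\<lambda>v. t ^ Suc n * v) ` V" using u w Vs subring_mult by blast
      qed
      show "(\<lambda>v. t ^ Suc n * v) ` V \<subseteq> Mp (Suc n)"
      proof
        fix z assume "z \<in> (\<lambda>v. t ^ Suc n * v) ` V"
        then obtain v where v: "v \<in> V" "z = t ^ Suc n * v" by blast
        have "t ^ n * v \<in> Mp n" using IH v by blast
        then have "t * (t ^ n * v) \<in> ideal_prod M (Mp n)" using ideal_prod_single tM by blast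
        then show "z \<in> Mp (Suc n)" using v by (simp add: mult.assoc)
      qed
    qed
  qed
qed

lemma t_nonzero: assumes Mt: "M = (\<lambda>v. t * v) ` V" shows "t \<noteq> 0"
proof
  assume "t = 0"
  then have "M \<subseteq> {0}" using Mt by auto
  then show False using M0 M_0 by blast
qed

lemma tM: assumes t: "t \<in> V" and Mt: "M = (\<lambda>v. t * v) ` V" shows "t \<in> M"
  using Mt Vs subring_1 by force

lemma DVR_V_tV: assumes "DVR V" obtains t where "t \<in> V" "M = (\<lambda>v. t * v) ` V"
  using assms Mi unfolding DVR_def by blast

lemma DVR_inter: assumes dv: "DVR V" shows "(\<Inter>n\<in>{1..}. Mp n) = {0}"
proof -
  obtain t where t: "t \<in> V" "M = (\<lambda>v. t * v) ` V" using DVR_V_tV[OF dv] by blast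
  have t0: "t \<noteq> 0" using t_nonzero[OF t(2)] .
  let ?I = "\<Inter>n\<in>{1..}. Mp n"
  have I: "?I = (\<Inter>n\<in>{1..}. (\<lambda>v. t ^ n * v) ` V)" using Mp_tV[OF t] by simp
  have idI: "ideal ?I V"
  proof -
    have "ideal ((\<lambda>v. t ^ n * v) ` V) V" for n
      by (rule principal_ideal_V) (use t Vs subring_pow in blast)
    then show ?thesis unfolding I by (rule ideal_INT) auto
  qed
  obtain a where a: "a \<in> V" "?I = (\<lambda>s. a * s) ` V" using dv idI unfolding DVR_def by blast
  have aI: "a \<in> ?I" using a Vs subring_1 by force
  have "a = 0"
  proof (rule ccontr)
    assume a0: "a \<noteq> 0"
    have "a / t \<in> ?I"
    proof
      fix n :: nat assume n: "n \<in> {1..}"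
      have "a \<in> Mp (Suc n)" by (rule INT_D[OF aI]) simp
      then have "a \<in> (\<lambda>v. t ^ Suc n * v) ` V" using Mp_tV[OF t, of "Suc n"] by simp
      then obtain w where w: "w \<in> V" "a = t ^ Suc n * w" by blast
      have "a / t = t ^ n * w" using w t0 by simp
      then show "a / t \<in> Mp n" using Mp_tV[OF t, of n] n w by auto
    qed
    then obtain c where c: "c \<in> V" "a / t = a * c" using a by blast
    then have "t * c = 1" using a0 t0 by (simp add: field_simps)
    then have "inverse t = c" by (metis inverse_unique)
    then show False using M_nonunit[OF tM[OF t] t0] c by simp
  qed
  then show ?thesis using a Vs subring_0 by auto
qed

lemma decomp:
  assumes t: "t \<in> V" and Mt: "M = (\<lambda>v. t * v) ` V" and y: "y \<in> V" "y \<notin> (\<lambda>v. t ^ n * v) ` V"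
  shows "\<exists>j u. u \<in> V \<and> u \<notin> M \<and> y = t ^ j * u"
  using y
proof (induct n arbitrary: y)
  case 0 then show ?case by simp
next
  case (Suc n)
  show ?case
  proof (cases "y \<in> M")
    case False then show ?thesis using Suc.prems by (intro exI[of _ 0] exI[of _ y]) simp
  next
    case True
    then obtain y' where y': "y' \<in> V" "y = t * y'" using Mt by blast
    have "y' \<notin> (\<lambda>v. t ^ n * v) ` V"
    proof
      assume "y' \<in> (\<lambda>v. t ^ n * v) ` V"
      then obtain w where "w \<in> V" "y' = t ^ n * w" by blast
      then have "y = t ^ Suc n * w" using y' by simp
      then show False using Suc.prems \<open>w \<in> V\<close> by blast
    qed
    then obtain j u where "u \<in> V" "u \<notin> M" "y' = t ^ j * u" using Suc.hyps y' by blast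
    then show ?thesis using y' by (intro exI[of _ "Suc j"] exI[of _ u]) simp
  qed
qed

lemma decomp2:
  assumes t: "t \<in> V" and Mt: "M = (\<lambda>v. t * v) ` V" and I0: "(\<Inter>n\<in>{1..}. Mp n) = {0}"
    and y: "y \<in> V" "y \<noteq> 0"
  shows "\<exists>j u. u \<in> V \<and> u \<notin> M \<and> y = t ^ j * u"
proof -
  obtain n where n: "n \<ge> 1" "y \<notin> Mp n" using I0 y by auto
  then have "y \<notin> (\<lambda>v. t ^ n * v) ` V" using Mp_tV[OF t Mt n(1)] by simp
  then show ?thesis using decomp[OF t Mt y(1)] by blast
qed

lemma inter_DVR: assumes I0: "(\<Inter>n\<in>{1..}. Mp n) = {0}" shows "DVR V"
proof -
  have M2: "Mp 2 \<subseteq> M" using Mp_sub_M by simp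
  have "Mp 2 \<noteq> M"
  proof
    assume h: "Mp 2 = M"
    have "Mp n = M" if "n \<ge> 1" for n
      using that
    proof (induct n)
      case 0 then show ?case by simp
    next
      case (Suc n)
      show ?case
      proof (cases n)
        case 0 then show ?thesis using Mp1 by simp
      next
        case (Suc j)
        then have "Mp n = M" using Suc.hyps by simp
        then have "Mp (Suc n) = ideal_prod M M" by simp
        also have "\<dots> = Mp 2" using Mp1 by (simp add: numeral_2_eq_2)
        finally show ?thesis using h by simp
      qed
    qed
    then have "(\<Inter>n\<in>{1..}. Mp n) = M" by auto
    then show False using I0 M0 by simp
  qed
  then obtain t where tM: "t \<in> M" and tn: "t \<notin> Mp 2" using M2 by blast
  have tV: "t \<in> V" using tM MV by blast
  have Mt: "M = (\<lambda>v. t * v) ` V"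
  proof
    show "(\<lambda>v. t * v) ` V \<subseteq> M" using M_mult2 tM by blast
    show "M \<subseteq> (\<lambda>v. t * v) ` V"
    proof
      fix m assume m: "m \<in> M"
      from val[OF tV] m MV have "(\<exists>c\<in>V. m = t * c) \<or> (\<exists>c\<in>V. t = m * c)" by blast
      then show "m \<in> (\<lambda>v. t * v) ` V"
      proof
        assume "\<exists>c\<in>V. m = t * c" then show ?thesis by blast
      next
        assume "\<exists>c\<in>V. t = m * c"
        then obtain c where c: "c \<in> V" "t = m * c" by blast
        show ?thesis
        proof (cases "c \<in> M")
          case True
          then have "m * c \<in> ideal_prod M (Mp 1)" using Mp1 m ideal_prod_single by simp
          then have "t \<in> Mp 2" using c by (simp add: numeral_2_eq_2)
          then show ?thesis using tn by simp
        next
          case False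
          then have "c \<noteq> 0" "inverse c \<in> V" using unit_notin_M c by auto
          then have "m = t * inverse c" using c by simp
          then show ?thesis using \<open>inverse c \<in> V\<close> by blast
        qed
      qed
    qed
  qed
  have t0: "t \<noteq> 0" using t_nonzero[OF Mt] .
  have dec: "\<And>y. y \<in> V \<Longrightarrow> y \<noteq> 0 \<Longrightarrow> \<exists>j u. u \<in> V \<and> u \<notin> M \<and> y = t ^ j * u"
    using decomp2[OF tV Mt I0] by blast
  have princ: "\<exists>a\<in>V. I = (\<lambda>s. a * s) ` V" if I: "ideal I V" for I
  proof (cases "I = {0}")
    case True
    then show ?thesis using Vs subring_0 by (intro bexI[of _ 0]) auto
  next
    case False
    then obtain y where y: "y \<in> I" "y \<noteq> 0" using I by (auto simp: ideal_def)
    have yV: "y \<in> V" using y I by (auto simp: ideal_def)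
    define P where "P j \<longleftrightarrow> (\<exists>y\<in>I. \<exists>u. u \<in> V \<and> u \<notin> M \<and> y = t ^ j * u)" for j
    have "\<exists>j. P j" using dec[OF yV y(2)] y unfolding P_def by blast
    then have "P (LEAST j. P j)" by (rule LeastI_ex)
    then obtain y0 u0 where y0: "y0 \<in> I" "u0 \<in> V" "u0 \<notin> M" "y0 = t ^ (LEAST j. P j) * u0"
      unfolding P_def by blast
    define n0 where "n0 = (LEAST j. P j)"
    have u0: "u0 \<noteq> 0" "inverse u0 \<in> V" using unit_notin_M y0 by auto
    have y0V: "y0 \<in> V" using y0 I by (auto simp: ideal_def)
    have sub1: "I \<subseteq> (\<lambda>s. y0 * s) ` V"
    proof
      fix z assume z: "z \<in> I"
      show "z \<in> (\<lambda>s. y0 * s) ` V"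
      proof (cases "z = 0")
        case True then show ?thesis using Vs subring_0 by force
      next
        case False
        have zV: "z \<in> V" using z I by (auto simp: ideal_def)
        obtain j u where ju: "u \<in> V" "u \<notin> M" "z = t ^ j * u" using dec[OF zV False] by blast
        then have "P j" using z unfolding P_def by blast
        then have jn: "n0 \<le> j" unfolding n0_def by (rule Least_le)
        have "z = y0 * (t ^ (j - n0) * u * inverse u0)"
          using ju y0(4) u0 jn by (simp add: n0_def[symmetric] power_add[symmetric] field_simps)
        moreover have "t ^ (j - n0) * u * inverse u0 \<in> V"
          using tV ju u0 Vs by (simp add: subring_mult subring_pow)
        ultimately show ?thesis by blast
      qed
    qed
    have sub2: "(\<lambda>s. y0 * s) ` V \<subseteq> I"
    proof
      fix z assume "z \<in> (\<lambda>s. y0 * s) ` V"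
      then obtain s where "s \<in> V" "z = y0 * s" by blast
      then show "z \<in> I" using I y0(1) by (auto simp: ideal_def mult.commute)
    qed
    show ?thesis using y0V sub1 sub2 by blast
  qed
  have maxM: "maximal_ideal I V \<Longrightarrow> I = M" for I
  proof -
    assume mI: "maximal_ideal I V"
    have iI: "ideal I V" and IV: "I \<noteq> V" using mI by (auto simp: maximal_ideal_def)
    have sub: "I \<subseteq> V" and cl: "\<And>x s. x \<in> I \<Longrightarrow> s \<in> V \<Longrightarrow> s * x \<in> I"
      using iI unfolding ideal_def by auto
    have IM: "I \<subseteq> M"
    proof
      fix x assume x: "x \<in> I"
      show "x \<in> M"
      proof (rule ccontr)
        assume "x \<notin> M"
        moreover have "x \<in> V" using x sub by blast
        ultimately have u: "x \<noteq> 0" "inverse x \<in> V" using unit_notin_M by auto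
        have "inverse x * x \<in> I" using cl x u by blast
        then have one: "1 \<in> I" using u by simp
        have "V \<subseteq> I"
        proof
          fix v assume "v \<in> V" then have "v * 1 \<in> I" using cl one by blast
          then show "v \<in> I" by simp
        qed
        then show False using IV sub by blast
      qed
    qed
    have "M = I \<or> M = V" using mI Mi IM unfolding maximal_ideal_def by blast
    then show "I = M" using M by (auto simp: maximal_ideal_def)
  qed
  have nf: "\<not> subfield V"
    using M_nonunit[OF tM t0] tV t0 by (auto simp: subfield_def)
  show ?thesis unfolding DVR_def using Vs princ maxM M nf by blast
qed

end



context setting begin

definition Qn :: "'a set" where "Qn = {x \<in> R. x = 0 \<or> inverse x \<notin> R}"

lemma ideal_one: "ideal J R \<Longrightarrow> x \<in> J \<Longrightarrow> x \<noteq> 0 \<Longrightarrow> inverse x \<in> R \<Longrightarrow> J = R"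
proof -
  assume J: "ideal J R" and x: "x \<in> J" "x \<noteq> 0" "inverse x \<in> R"
  have sub: "J \<subseteq> R" and cl: "\<And>y s. y \<in> J \<Longrightarrow> s \<in> R \<Longrightarrow> s * y \<in> J"
    using J unfolding ideal_def by auto
  have "inverse x * x \<in> J" using cl x by blast
  then have one: "1 \<in> J" using x by simp
  have "R \<subseteq> J"
  proof
    fix r assume "r \<in> R" then have "r * 1 \<in> J" using cl one by blast
    then show "r \<in> J" by simp
  qed
  then show "J = R" using sub by blast
qed

lemma inv_from_pow:
  assumes S: "subring S" and d: "d \<in> S" "d \<noteq> 0" and n: "n \<ge> 1" and e: "inverse d ^ n \<in> S"
  shows "inverse d \<in> S"
proof -
  have "inverse d = d ^ (n - 1) * inverse d ^ n"
    using d n by (simp add: power_inverse[symmetric] field_simps power_Suc[symmetric])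
  moreover have "d ^ (n - 1) * inverse d ^ n \<in> S" by (rule subring_mult[OF S subring_pow[OF S d(1)] e])
  ultimately show ?thesis by simp
qed

lemma Pp_unit_R:
  assumes P: Pp and x: "x \<in> R" "pi x \<noteq> 0" "inverse (pi x) \<in> Dt"
  shows "x \<noteq> 0 \<and> inverse x \<in> R"
proof -
  have xV: "x \<in> V" using x RV by blast
  have xM: "x \<notin> M" using x(2) pi_M by blast
  have u: "x \<noteq> 0" "inverse x \<in> V" using unit_notin_M[OF xV xM] by auto
  obtain n where n: "n \<ge> 1" "inverse (pi x) ^ n \<in> D" using Pp_Dt_root[OF P x(3)] by blast
  have "pi x \<in> D" using x by (simp add: R_char)
  then have "inverse (pi x) \<in> D" using inv_from_pow[OF D _ x(2) n] by blast
  then have "pi (inverse x) \<in> D" using pi_inv[OF xV xM] by simp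
  then show ?thesis using u by (simp add: R_char)
qed

lemma R_unit_pi:
  assumes x: "x \<in> R" "x \<noteq> 0" "inverse x \<in> R"
  shows "pi x \<noteq> 0 \<and> inverse (pi x) \<in> D"
proof -
  have xV: "x \<in> V" using x RV by blast
  have xM: "x \<notin> M" using M_nonunit x RV by blast
  have "pi x \<noteq> 0" using pi_zero_iff[OF xV] xM by simp
  moreover have "pi (inverse x) \<in> D" using x by (simp add: R_char)
  ultimately show ?thesis using pi_inv[OF xV xM] by simp
qed

lemma Pp_Qn_char: assumes P: Pp shows "Qn = {x \<in> R. pi x \<in> {y \<in> Dt. y = 0 \<or> inverse y \<notin> Dt}}"
proof -
  have "x \<in> Qn \<longleftrightarrow> x \<in> R \<and> (pi x = 0 \<or> inverse (pi x) \<notin> Dt)" for x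
  proof
    assume "x \<in> Qn"
    then have x: "x \<in> R" "x = 0 \<or> inverse x \<notin> R" by (auto simp: Qn_def)
    then show "x \<in> R \<and> (pi x = 0 \<or> inverse (pi x) \<notin> Dt)" using Pp_unit_R[OF P x(1)] by blast
  next
    assume x: "x \<in> R \<and> (pi x = 0 \<or> inverse (pi x) \<notin> Dt)"
    then show "x \<in> Qn" using R_unit_pi[of x] D_Dt unfolding Qn_def by blast
  qed
  moreover have "x \<in> R \<Longrightarrow> pi x \<in> Dt" for x using D_Dt by (auto simp: R_char)
  ultimately show ?thesis by blast
qed

lemma Pp_Qn_max: assumes P: Pp shows "maximal_ideal Qn R"
proof -
  let ?N = "{y \<in> Dt. y = 0 \<or> inverse y \<notin> Dt}"
  have N: "ideal ?N Dt" by (rule valuation_nonunits_ideal[OF Pp_Dt_val[OF P]])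
  have Nadd: "a \<in> ?N \<Longrightarrow> b \<in> ?N \<Longrightarrow> a + b \<in> ?N" for a b using N unfolding ideal_def by blast
  have Nmul: "a \<in> ?N \<Longrightarrow> s \<in> Dt \<Longrightarrow> s * a \<in> ?N" for a s using N unfolding ideal_def by blast
  have Q: "Qn = {x \<in> R. pi x \<in> ?N}" by (rule Pp_Qn_char[OF P])
  have iQ: "ideal Qn R" unfolding ideal_def
  proof (intro conjI ballI)
    show "Qn \<subseteq> R" by (auto simp: Qn_def)
    show "0 \<in> Qn" using Rs subring_0 by (auto simp: Qn_def)
    fix x assume x: "x \<in> Qn"
    then have xR: "x \<in> R" and xN: "pi x \<in> ?N" using Q by auto
    { fix y assume "y \<in> Qn"
      then have yR: "y \<in> R" and yN: "pi y \<in> ?N" using Q by auto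
      have "pi (x + y) = pi x + pi y" using xR yR RV pi_add by blast
      then have "pi (x + y) \<in> ?N" using Nadd[OF xN yN] by simp
      moreover have "x + y \<in> R" using xR yR Rs subring_add by blast
      ultimately show "x + y \<in> Qn" using Q by blast }
    { fix s assume sR: "s \<in> R"
      have "pi (s * x) = pi s * pi x" using xR sR RV pi_mult by blast
      moreover have "pi s \<in> Dt" using sR D_Dt by (auto simp: R_char)
      ultimately have "pi (s * x) \<in> ?N" using Nmul[OF xN] by simp
      moreover have "s * x \<in> R" using xR sR Rs subring_mult by blast
      ultimately show "s * x \<in> Qn" using Q by blast }
  qed
  have "1 \<notin> Qn" using Rs subring_1 by (simp add: Qn_def)
  then have ne: "Qn \<noteq> R" using Rs subring_1 by blast
  have mx: "J = Qn \<or> J = R" if J: "ideal J R" "Qn \<subseteq> J" for J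
  proof (cases "J = Qn")
    case False
    then obtain x where x: "x \<in> J" "x \<notin> Qn" using J by blast
    then have "x \<in> R" "x \<noteq> 0" "inverse x \<in> R" using J unfolding ideal_def Qn_def by auto
    then show ?thesis using ideal_one[OF J(1) x(1)] by blast
  qed simp
  show ?thesis unfolding maximal_ideal_def using iQ ne mx by blast
qed

lemma Dfield_unit: assumes F: "subfield D" and x: "x \<in> R" "x \<notin> M" shows "x \<noteq> 0 \<and> inverse x \<in> R"
proof -
  have xV: "x \<in> V" using x RV by blast
  have u: "x \<noteq> 0" "inverse x \<in> V" using unit_notin_M[OF xV x(2)] by auto
  have "pi x \<in> D" "pi x \<noteq> 0" using x pi_zero_iff[OF xV] by (auto simp: R_char)
  then have "inverse (pi x) \<in> D" using F by (simp add: subfield_def)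
  then show ?thesis using u pi_inv[OF xV x(2)] by (simp add: R_char)
qed

lemma Dfield_max: assumes F: "subfield D" shows "maximal_ideal Q R \<longleftrightarrow> Q = M"
proof
  have MRne: "M \<noteq> R" using one_notin_M Rs subring_1 by blast
  assume mQ: "maximal_ideal Q R"
  have iQ: "ideal Q R" and QR: "Q \<noteq> R" using mQ by (auto simp: maximal_ideal_def)
  have "Q \<subseteq> M"
  proof
    fix x assume x: "x \<in> Q"
    have xR: "x \<in> R" using x iQ by (auto simp: ideal_def)
    show "x \<in> M"
    proof (rule ccontr)
      assume "x \<notin> M"
      then have "x \<noteq> 0" "inverse x \<in> R" using Dfield_unit[OF F xR] by auto
      then show False using ideal_one[OF iQ x] QR by blast
    qed
  qed
  then have "M = Q \<or> M = R" using mQ ideal_M_R unfolding maximal_ideal_def by blast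
  then show "Q = M" using MRne by auto
next
  assume Q: "Q = M"
  have mx: "J = M \<or> J = R" if J: "ideal J R" "M \<subseteq> J" for J
  proof (cases "J = M")
    case False
    then obtain x where x: "x \<in> J" "x \<notin> M" using J by blast
    then have xR: "x \<in> R" using J unfolding ideal_def by auto
    then have "x \<noteq> 0" "inverse x \<in> R" using Dfield_unit[OF F xR x(2)] by auto
    then show ?thesis using ideal_one[OF J(1) x(1)] by blast
  qed simp
  show "maximal_ideal Q R" unfolding Q maximal_ideal_def
    using ideal_M_R one_notin_M Rs subring_1 mx by blast
qed

lemma Rbar_eq_V: assumes P: Pp and F: "subfield D" shows "{x. isint R x} = V"
proof
  show "{x. isint R x} \<subseteq> V" using Rbar_V by blast
  show "V \<subseteq> {x. isint R x}"
  proof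
    fix x assume xV: "x \<in> V"
    show "x \<in> {x. isint R x}"
    proof (cases "pi x = 0")
      case True
      then have "x \<in> R" using xV pi_zero_iff MR by blast
      then show ?thesis using isint_mem Rs by blast
    next
      case False
      obtain n where n: "n \<ge> 1" and h: "pi x ^ n \<in> D \<or> inverse (pi x) ^ n \<in> D"
        using P pi(1)[OF xV] False unfolding Pp_def by blast
      have "pi x ^ n \<in> D"
      proof (cases "pi x ^ n \<in> D")
        case False
        then have "inverse (pi x) ^ n \<in> D" using h by blast
        then have "inverse (inverse (pi x) ^ n) \<in> D" using F \<open>pi x \<noteq> 0\<close> by (simp add: subfield_def)
        then show ?thesis by (simp add: power_inverse)
      qed
      then have "x ^ n \<in> R" using xV pi_pow subring_pow[OF Vs] by (auto simp: R_char)
      then show ?thesis using isint_root[OF Rs n] by blast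
    qed
  qed
qed

lemma not_field_d: assumes "\<not> subfield D" obtains d where "d \<in> D" "d \<noteq> 0" "inverse d \<notin> D"
  using assms D unfolding subfield_def by blast

lemma d_Qn: assumes d: "d \<in> D" "d \<noteq> 0" "inverse d \<notin> D" shows "d \<in> Qn"
proof -
  have "inverse d \<notin> R" using d RK K_inv DK by blast
  then show ?thesis using d DR by (auto simp: Qn_def)
qed

abbreviation "W \<equiv> AV_domain R \<and> DVR V \<and> subfield D"

lemma A1_W: "(AV_domain R \<and> DVR {x. isint R x}) \<longleftrightarrow> W"
proof
  assume h: "AV_domain R \<and> DVR {x. isint R x}"
  have P: Pp using AV_R_Pp h by blast
  have RbV: "{x. isint R x} = V"
  proof (rule principal_M_imp_V)
    show "subring {x. isint R x}" using h by (simp add: DVR_def)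
    show "M \<subseteq> {x. isint R x}" using MR isint_mem Rs by blast
    show "{x. isint R x} \<subseteq> V" using Rbar_V by blast
    show "\<forall>I. ideal I {x. isint R x} \<longrightarrow> (\<exists>a\<in>{x. isint R x}. I = (*) a ` {x. isint R x})"
      using h by (simp add: DVR_def)
  qed
  have "subfield D" unfolding subfield_def
  proof (intro conjI D ballI impI)
    fix d assume d: "d \<in> D" "d \<noteq> 0"
    have iK: "inverse d \<in> K" using d DK K_inv by blast
    then have "isint R (inverse d)" using RbV KV by blast
    then have "isint D (pi (inverse d))" using Rbar_pi by blast
    then have "inverse d \<in> Dt" using iK pi_K by (simp add: Dt_def)
    then obtain n where "n \<ge> 1" "inverse d ^ n \<in> D" using Pp_Dt_root[OF P] by blast
    then show "inverse d \<in> D" using inv_from_pow[OF D d] by blast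
  qed
  then show W using h RbV by simp
next
  assume w: W
  have P: Pp using AV_R_Pp w by blast
  show "AV_domain R \<and> DVR {x. isint R x}" using w Rbar_eq_V[OF P] by simp
qed

lemma A2_W: "(AV_domain R \<and> (\<forall>Q. maximal_ideal Q R \<longrightarrow> (\<Inter>n\<in>{1..}. ideal_pow R Q n) = {0})) \<longleftrightarrow> W"
proof
  assume h: "AV_domain R \<and> (\<forall>Q. maximal_ideal Q R \<longrightarrow> (\<Inter>n\<in>{1..}. ideal_pow R Q n) = {0})"
  have P: Pp using AV_R_Pp h by blast
  have F: "subfield D"
  proof (rule ccontr)
    assume "\<not> subfield D"
    then obtain d where d: "d \<in> D" "d \<noteq> 0" "inverse d \<notin> D" by (rule not_field_d)
    have dQ: "d \<in> Qn" using d_Qn[OF d] .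
    have "M \<subseteq> ideal_pow R Qn n" for n
    proof (induct n)
      case 0 then show ?case using MR by simp
    next
      case (Suc n)
      show ?case
      proof
        fix m assume m: "m \<in> M"
        have "inverse d * m \<in> M" using M_mult[OF _ m] d DK KV K_inv by blast
        then have "inverse d * m \<in> ideal_pow R Qn n" using Suc by blast
        then have "d * (inverse d * m) \<in> ideal_pow R Qn (Suc n)"
          using ideal_prod_single[OF dQ] by simp
        moreover have "d * (inverse d * m) = m" using d(2) by (metis mult.assoc mult.left_neutral right_inverse)
        ultimately show "m \<in> ideal_pow R Qn (Suc n)" by metis
      qed
    qed
    then have "M \<subseteq> (\<Inter>n\<in>{1..}. ideal_pow R Qn n)" by blast
    then have "M \<subseteq> {0}" using h Pp_Qn_max[OF P] by simp
    then show False using M0 M_0 by blast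
  qed
  have "(\<Inter>n\<in>{1..}. Mp n) = {0}" using h Dfield_max[OF F] by simp
  then show W using inter_DVR h F by blast
next
  assume w: W
  have F: "subfield D" using w by blast
  have I0: "(\<Inter>n\<in>{1..}. Mp n) = {0}" using DVR_inter w by blast
  show "AV_domain R \<and> (\<forall>Q. maximal_ideal Q R \<longrightarrow> (\<Inter>n\<in>{1..}. ideal_pow R Q n) = {0})"
  proof (intro conjI allI impI)
    show "AV_domain R" using w by blast
    fix Q assume "maximal_ideal Q R"
    then have "Q = M" using Dfield_max[OF F] by blast
    then show "(\<Inter>n\<in>{1..}. ideal_pow R Q n) = {0}" using I0 by simp
  qed
qed

lemma A3_W: "(AV_domain R \<and> (\<forall>Q. maximal_ideal Q R \<longrightarrow>
           (\<forall>A. ideal A R \<and> {0} \<subset> A \<and> A \<subset> R \<longrightarrow> (\<exists>n. ideal_pow R Q n \<subseteq> A)))) \<longleftrightarrow> W"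
proof
  assume h: "AV_domain R \<and> (\<forall>Q. maximal_ideal Q R \<longrightarrow>
           (\<forall>A. ideal A R \<and> {0} \<subset> A \<and> A \<subset> R \<longrightarrow> (\<exists>n. ideal_pow R Q n \<subseteq> A)))"
  have P: Pp using AV_R_Pp h by blast
  have MRs: "{0} \<subset> M" "M \<subset> R" using M0 M_0 MR one_notin_M Rs subring_1 by blast+
  have F: "subfield D"
  proof (rule ccontr)
    assume "\<not> subfield D"
    then obtain d where d: "d \<in> D" "d \<noteq> 0" "inverse d \<notin> D" by (rule not_field_d)
    have dQ: "d \<in> Qn" using d_Qn[OF d] .
    obtain n where n: "ideal_pow R Qn n \<subseteq> M" using h Pp_Qn_max[OF P] ideal_M_R MRs by blast
    have "d ^ k \<in> ideal_pow R Qn k" for k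
    proof (induct k)
      case 0 then show ?case using Rs subring_1 by simp
    next
      case (Suc k)
      then show ?case using ideal_prod_single[OF dQ Suc] by simp
    qed
    then have "d ^ n \<in> M" using n by blast
    moreover have "d ^ n \<in> K" using d DK pow_K by blast
    ultimately have "d ^ n = 0" using KM by blast
    then show False using d by simp
  qed
  have I0: "(\<Inter>n\<in>{1..}. Mp n) = {0}"
  proof (rule ccontr)
    assume "(\<Inter>n\<in>{1..}. Mp n) \<noteq> {0}"
    moreover have "0 \<in> (\<Inter>n\<in>{1..}. Mp n)"
    proof -
      have "ideal_prod M X \<supseteq> {0}" for X :: "'a set" using ideal_prod_single[of 0 M] M_0
        unfolding ideal_prod_def by (auto intro!: exI[of _ 0])
      then show ?thesis by (auto intro!: INT_I) (metis Suc_le_D ideal_pow.simps(2) insert_subset)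
    qed
    ultimately obtain x where x: "x \<in> (\<Inter>n\<in>{1..}. Mp n)" "x \<noteq> 0" by blast
    have xM: "x \<in> M" using INT_D[OF x(1), of 1] Mp1 by simp
    define A where "A = (\<lambda>m. x * m) ` M"
    obtain m0 where m0: "m0 \<in> M" "m0 \<noteq> 0" by (rule M_ne)
    have AM: "A \<subseteq> M" using xM M_mult2 MV by (auto simp: A_def)
    have iA: "ideal A R" unfolding ideal_def
    proof (intro conjI ballI)
      show "A \<subseteq> R" using AM MR by blast
      show "0 \<in> A" using M_0 by (force simp: A_def)
      fix a assume "a \<in> A"
      then obtain m where m: "m \<in> M" "a = x * m" by (auto simp: A_def)
      { fix b assume "b \<in> A"
        then obtain m' where m': "m' \<in> M" "b = x * m'" by (auto simp: A_def)
        have "a + b = x * (m + m')" using m m' by (simp add: distrib_left)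
        then show "a + b \<in> A" using M_add[OF m(1) m'(1)] by (auto simp: A_def) }
      { fix s assume "s \<in> R"
        then have "s * m \<in> M" using R_mult_M m by blast
        moreover have "s * a = x * (s * m)" using m by (simp add: mult.left_commute)
        ultimately show "s * a \<in> A" by (auto simp: A_def) }
    qed
    have "x * m0 \<in> A" "x * m0 \<noteq> 0" using m0 x by (auto simp: A_def)
    then have A0: "{0} \<subset> A" using iA by (auto simp: ideal_def)
    have AR: "A \<subset> R" using AM MRs by blast
    obtain n where n: "Mp n \<subseteq> A" using h Dfield_max[OF F] iA A0 AR by blast
    show False
    proof (cases n)
      case 0 then show False using n AR by simp
    next
      case (Suc j)
      then have "x \<in> Mp n" using INT_D[OF x(1), of n] by simp
      then have "x \<in> A" using n by blast
      then obtain m where m: "m \<in> M" "x = x * m" by (auto simp: A_def)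
      then have "m = 1" using x(2) by (metis mult_cancel_left1)
      then show False using m one_notin_M by simp
    qed
  qed
  show W using h F inter_DVR[OF I0] by blast
next
  assume w: W
  have F: "subfield D" using w by blast
  obtain t where t: "t \<in> V" "M = (\<lambda>v. t * v) ` V" using DVR_V_tV w by blast
  have I0: "(\<Inter>n\<in>{1..}. Mp n) = {0}" using DVR_inter w by blast
  have key: "\<exists>n. Mp n \<subseteq> A" if A: "ideal A R" "{0} \<subset> A" "A \<subset> R" for A
  proof -
    have AM: "A \<subseteq> M"
    proof
      fix x assume x: "x \<in> A"
      have xR: "x \<in> R" using x A by (auto simp: ideal_def)
      show "x \<in> M"
      proof (rule ccontr)
        assume "x \<notin> M"
        then have "x \<noteq> 0" "inverse x \<in> R" using Dfield_unit[OF F xR] by auto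
        then show False using ideal_one[OF A(1) x] A(3) by blast
      qed
    qed
    obtain x where x: "x \<in> A" "x \<noteq> 0" using A(2) by blast
    have xV: "x \<in> V" using x AM MV by blast
    obtain j u where ju: "u \<in> V" "u \<notin> M" "x = t ^ j * u" using decomp2[OF t I0 xV x(2)] by blast
    have u: "u \<noteq> 0" "inverse u \<in> V" using unit_notin_M ju by auto
    have "Mp (Suc j) \<subseteq> A"
    proof
      fix z assume "z \<in> Mp (Suc j)"
      then obtain v where v: "v \<in> V" "z = t ^ Suc j * v" using Mp_tV[OF t, of "Suc j"] by auto
      have "t * inverse u * v \<in> M" using t v u M_mult2 tM[OF t] Vs subring_mult by metis
      then have s: "t * inverse u * v \<in> R" using MR by blast
      have "z = (t * inverse u * v) * x" using v ju u by (simp add: field_simps)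
      then show "z \<in> A" using A(1) s x unfolding ideal_def by blast
    qed
    then show ?thesis by blast
  qed
  show "AV_domain R \<and> (\<forall>Q. maximal_ideal Q R \<longrightarrow>
           (\<forall>A. ideal A R \<and> {0} \<subset> A \<and> A \<subset> R \<longrightarrow> (\<exists>n. ideal_pow R Q n \<subseteq> A)))"
  proof (intro conjI allI impI)
    show "AV_domain R" using w by blast
    fix Q A assume Q: "maximal_ideal Q R" and A: "ideal A R \<and> {0} \<subset> A \<and> A \<subset> R"
    have "Q = M" using Q Dfield_max[OF F] by blast
    then show "\<exists>n. ideal_pow R Q n \<subseteq> A" using key A by blast
  qed
qed

lemma A4_W: assumes av: "AV_domain R"
  shows "(DVR V \<and> D = frac_field D \<and> subfield (frac_field D) \<and> root_ext (frac_field D) K) \<longleftrightarrow> W"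
proof
  assume "DVR V \<and> D = frac_field D \<and> subfield (frac_field D) \<and> root_ext (frac_field D) K"
  then show W using av by metis
next
  assume w: W
  have P: Pp using AV_R_Pp av by blast
  have F: "subfield D" using w by blast
  have "frac_field D = D"
  proof
    show "frac_field D \<subseteq> D" unfolding frac_field_def using F
      by (auto simp: subfield_def divide_inverse subring_def)
    show "D \<subseteq> frac_field D" using frac_intro[of _ D 1] D subring_1 by fastforce
  qed
  then show "DVR V \<and> D = frac_field D \<and> subfield (frac_field D) \<and> root_ext (frac_field D) K"
    using w Pp_AV_D[OF P] by simp
qed

end



context setting begin

lemma A4_AV: assumes "DVR V \<and> D = frac_field D \<and> subfield (frac_field D) \<and> root_ext (frac_field D) K"
  shows "AV_domain R"
proof -
  have "Pp" unfolding Pp_def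
  proof (intro ballI impI)
    fix k assume "k \<in> K" "k \<noteq> 0"
    then obtain n where "n \<ge> 1" "k ^ n \<in> frac_field D" using assms by (auto simp: root_ext_def)
    then have "k ^ n \<in> D" using assms by metis
    then show "(\<exists>n\<ge>1. k ^ n \<in> D) \<or> (\<exists>n\<ge>1. inverse k ^ n \<in> D)" using \<open>n \<ge> 1\<close> by blast
  qed
  then show ?thesis by (rule Pp_AV_R)
qed

lemma main:
  "(((DVR R \<longleftrightarrow> D = K \<and> DVR V) \<and> (D = K \<and> DVR V \<longleftrightarrow> R = V \<and> DVR V)) \<and>
     ((rational_valuation_domain R \<longleftrightarrow> D = K \<and> rational_valuation_domain V) \<and>
      (D = K \<and> rational_valuation_domain V \<longleftrightarrow> R = V \<and> rational_valuation_domain V))) \<and>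
    ((root_ext R {x. isint R x} \<longleftrightarrow> root_ext D Dt) \<and>
     (bounded_root_ext R {x. isint R x} \<longleftrightarrow> bounded_root_ext D Dt)) \<and>
    ((AV_domain R \<longleftrightarrow> valuation_domain Dt \<and> frac_field Dt = K \<and> root_ext D Dt) \<and>
     (valuation_domain Dt \<and> frac_field Dt = K \<and> root_ext D Dt \<longleftrightarrow> AV_domain D \<and> root_ext (frac_field D) K)) \<and>
    (((AV_domain R \<and> DVR {x. isint R x}) \<longleftrightarrow>
        (AV_domain R \<and> (\<forall>Q. maximal_ideal Q R \<longrightarrow> (\<Inter>n\<in>{1..}. ideal_pow R Q n) = {0}))) \<and>
     ((AV_domain R \<and> (\<forall>Q. maximal_ideal Q R \<longrightarrow> (\<Inter>n\<in>{1..}. ideal_pow R Q n) = {0})) \<longleftrightarrow>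
        (AV_domain R \<and> (\<forall>Q. maximal_ideal Q R \<longrightarrow>
           (\<forall>A. ideal A R \<and> {0} \<subset> A \<and> A \<subset> R \<longrightarrow> (\<exists>n. ideal_pow R Q n \<subseteq> A))))) \<and>
     ((AV_domain R \<and> (\<forall>Q. maximal_ideal Q R \<longrightarrow>
           (\<forall>A. ideal A R \<and> {0} \<subset> A \<and> A \<subset> R \<longrightarrow> (\<exists>n. ideal_pow R Q n \<subseteq> A)))) \<longleftrightarrow>
        (DVR V \<and> D = frac_field D \<and> subfield (frac_field D) \<and> root_ext (frac_field D) K)))"
proof (intro conjI)
  show "DVR R \<longleftrightarrow> D = K \<and> DVR V"
    using DVR_R R_eq_V_iff by metis
  show "D = K \<and> DVR V \<longleftrightarrow> R = V \<and> DVR V" using R_eq_V_iff by blast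
  show "rational_valuation_domain R \<longleftrightarrow> D = K \<and> rational_valuation_domain V"
    using rational_R R_eq_V_iff by metis
  show "D = K \<and> rational_valuation_domain V \<longleftrightarrow> R = V \<and> rational_valuation_domain V"
    using R_eq_V_iff by blast
  show "root_ext R {x. isint R x} \<longleftrightarrow> root_ext D Dt" unfolding Dt_def by (rule root7)
  show "bounded_root_ext R {x. isint R x} \<longleftrightarrow> bounded_root_ext D Dt" unfolding Dt_def by (rule broot7)
  show "AV_domain R \<longleftrightarrow> valuation_domain Dt \<and> frac_field Dt = K \<and> root_ext D Dt"
    using AV_R_Pp Pp_Dt_val Pp_Dt_frac Pp_Dt_rootext Dt_Pp Pp_AV_R by blast
  show "valuation_domain Dt \<and> frac_field Dt = K \<and> root_ext D Dt \<longleftrightarrow> AV_domain D \<and> root_ext (frac_field D) K"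
    using Pp_Dt_val Pp_Dt_frac Pp_Dt_rootext Dt_Pp Pp_AV_D AV_D_Pp by blast
  show "(AV_domain R \<and> DVR {x. isint R x}) \<longleftrightarrow>
        (AV_domain R \<and> (\<forall>Q. maximal_ideal Q R \<longrightarrow> (\<Inter>n\<in>{1..}. ideal_pow R Q n) = {0}))"
    using A1_W A2_W by blast
  show "(AV_domain R \<and> (\<forall>Q. maximal_ideal Q R \<longrightarrow> (\<Inter>n\<in>{1..}. ideal_pow R Q n) = {0})) \<longleftrightarrow>
        (AV_domain R \<and> (\<forall>Q. maximal_ideal Q R \<longrightarrow>
           (\<forall>A. ideal A R \<and> {0} \<subset> A \<and> A \<subset> R \<longrightarrow> (\<exists>n. ideal_pow R Q n \<subseteq> A))))"
    using A2_W A3_W by blast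
  show "(AV_domain R \<and> (\<forall>Q. maximal_ideal Q R \<longrightarrow>
           (\<forall>A. ideal A R \<and> {0} \<subset> A \<and> A \<subset> R \<longrightarrow> (\<exists>n. ideal_pow R Q n \<subseteq> A)))) \<longleftrightarrow>
        (DVR V \<and> D = frac_field D \<and> subfield (frac_field D) \<and> root_ext (frac_field D) K)"
    using A3_W A4_W A4_AV by blast
qed

end

theorem theorem13:
  fixes V M K D F Dt R Rbar :: "'a::field set"
  assumes V: "valuation_domain V" and VL: "frac_field V = UNIV"
    and M: "maximal_ideal M V" and M0: "M \<noteq> {0}"
    and K: "subfield K" and KV: "K \<subseteq> V"
    and VKM: "V = {k + m | k m. k \<in> K \<and> m \<in> M}"
    and D: "subring D" and DK: "D \<subseteq> K"
    and F: "F = frac_field D"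
    and Dt: "Dt = integral_closure D K"
    and R: "R = {d + m | d m. d \<in> D \<and> m \<in> M}"
    and Rbar: "Rbar = integral_closure R UNIV"
  shows
    "(((DVR R \<longleftrightarrow> D = K \<and> DVR V) \<and> (D = K \<and> DVR V \<longleftrightarrow> R = V \<and> DVR V)) \<and>
     ((rational_valuation_domain R \<longleftrightarrow> D = K \<and> rational_valuation_domain V) \<and>
      (D = K \<and> rational_valuation_domain V \<longleftrightarrow> R = V \<and> rational_valuation_domain V))) \<and>
    ((root_ext R Rbar \<longleftrightarrow> root_ext D Dt) \<and>
     (bounded_root_ext R Rbar \<longleftrightarrow> bounded_root_ext D Dt)) \<and>
    ((AV_domain R \<longleftrightarrow> valuation_domain Dt \<and> frac_field Dt = K \<and> root_ext D Dt) \<and>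
     (valuation_domain Dt \<and> frac_field Dt = K \<and> root_ext D Dt \<longleftrightarrow> AV_domain D \<and> root_ext F K)) \<and>
    (((AV_domain R \<and> DVR Rbar) \<longleftrightarrow>
        (AV_domain R \<and> (\<forall>Q. maximal_ideal Q R \<longrightarrow> (\<Inter>n\<in>{1..}. ideal_pow R Q n) = {0}))) \<and>
     ((AV_domain R \<and> (\<forall>Q. maximal_ideal Q R \<longrightarrow> (\<Inter>n\<in>{1..}. ideal_pow R Q n) = {0})) \<longleftrightarrow>
        (AV_domain R \<and> (\<forall>Q. maximal_ideal Q R \<longrightarrow>
           (\<forall>A. ideal A R \<and> {0} \<subset> A \<and> A \<subset> R \<longrightarrow> (\<exists>n. ideal_pow R Q n \<subseteq> A))))) \<and>
     ((AV_domain R \<and> (\<forall>Q. maximal_ideal Q R \<longrightarrow>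
           (\<forall>A. ideal A R \<and> {0} \<subset> A \<and> A \<subset> R \<longrightarrow> (\<exists>n. ideal_pow R Q n \<subseteq> A)))) \<longleftrightarrow>
        (DVR V \<and> D = F \<and> subfield F \<and> root_ext F K)))"
proof -
  interpret S: setting V M K D
    by (unfold_locales) (rule V VL M M0 K KV VKM D DK)+
  have eR: "R = S.R" using R by (simp add: S.R_def)
  have eDt: "Dt = S.Dt" using Dt by (simp add: S.Dt_def integral_closure_isint)
  have eRbar: "Rbar = {x. isint S.R x}" using Rbar eR by (simp add: integral_closure_isint)
  show ?thesis unfolding eR eDt eRbar F by (rule S.main)
qed


end
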